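(* Let $X=\mathbb L_{\geq0}$ or $X=\mathbb L$. Then $\operatorname{Homeo}_{cpt}(X)$, equipped with the compact-open topology (as maps of $X$), is countably tight.
   Context: The Closed Long Ray $\mathbb L_{\geq0}$ is $\omega_1\times[0,1)$ with the order topology of the lexicographic order; the Long Line $\mathbb L$ is obtained by gluing a copy of $\mathbb L_{\geq0}$ with reversed order and a copy with the usual order at their least points $(0,0)$. $\operatorname{Homeo}_{cpt}(X)$ is the group of homeomorphisms $h$ of $X$ with compact support $\operatorname{cl}_X\{x\mid h(x)\neq x\}$. A space is countably tight if whenever $p\in\operatorname{cl}A$ there is a countable $C\subseteq A$ with $p\in\operatorname{cl}C$. *)

theory Defs
  imports "HOL-Analysis.Analysis"
begin

text \<open>A well-ordered type is (order-isomorphic to) omega_1 iff it is uncountable and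
  every proper initial segment is countable.\<close>
definition omega1_type :: "'w::wellorder itself \<Rightarrow> bool" where
  "omega1_type _ \<longleftrightarrow> uncountable (UNIV :: 'w set) \<and> (\<forall>x::'w. countable {..<x})"

text \<open>Order topology on a carrier S with strict order lt: generated by the open rays
  (S itself is added so that the topspace is S).\<close>
definition order_topology_on :: "'a set \<Rightarrow> ('a \<Rightarrow> 'a \<Rightarrow> bool) \<Rightarrow> 'a topology" where
  "order_topology_on S lt = topology_generated_by
     (insert S ({{x\<in>S. lt x a} | a. a \<in> S} \<union> {{x\<in>S. lt a x} | a. a \<in> S}))"

text \<open>Closed long ray: omega_1 \<times> [0,1) with the lexicographic order.\<close>
definition long_ray_carrier :: "('w::wellorder \<times> real) set" where
  "long_ray_carrier = UNIV \<times> {0..<1}"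

definition lex_less :: "('w::wellorder \<times> real) \<Rightarrow> ('w \<times> real) \<Rightarrow> bool" where
  "lex_less p q \<longleftrightarrow> fst p < fst q \<or> (fst p = fst q \<and> snd p < snd q)"

definition long_ray :: "('w::wellorder \<times> real) topology" where
  "long_ray = order_topology_on long_ray_carrier lex_less"

text \<open>Long line: a reversed copy (tag False) and a usual copy (tag True) of the long
  ray, glued at their least points (least element of 'w, 0); the glued point is
  represented by (True, least, 0).\<close>
definition long_line_carrier :: "(bool \<times> 'w::wellorder \<times> real) set" where
  "long_line_carrier = {(b, p). p \<in> long_ray_carrier \<and>
       \<not> (b = False \<and> p = ((LEAST w. True), 0))}"

definition long_line_less :: "(bool \<times> 'w::wellorder \<times> real) \<Rightarrow> (bool \<times> 'w \<times> real) \<Rightarrow> bool" where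
  "long_line_less x y \<longleftrightarrow>
     (case (x, y) of
        ((False, p), (False, q)) \<Rightarrow> lex_less q p
      | ((False, p), (True, q)) \<Rightarrow> True
      | ((True, p), (False, q)) \<Rightarrow> False
      | ((True, p), (True, q)) \<Rightarrow> lex_less p q)"

definition long_line :: "(bool \<times> 'w::wellorder \<times> real) topology" where
  "long_line = order_topology_on long_line_carrier long_line_less"

text \<open>Compactly supported homeomorphisms of X (normalised to be the identity off
  the carrier of X, so that they are determined by their action on X).\<close>
definition homeo_cpt :: "'a topology \<Rightarrow> ('a \<Rightarrow> 'a) set" where
  "homeo_cpt X = {h. homeomorphic_map X X h \<and> (\<forall>x. x \<notin> topspace X \<longrightarrow> h x = x) \<and>
      compactin X (X closure_of {x \<in> topspace X. h x \<noteq> x})}"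

definition compact_open_on :: "('a \<Rightarrow> 'a) set \<Rightarrow> 'a topology \<Rightarrow> ('a \<Rightarrow> 'a) topology" where
  "compact_open_on H X = topology_generated_by
     (insert H {{f \<in> H. f ` K \<subseteq> U} | K U. compactin X K \<and> openin X U})"

definition countably_tight :: "'a topology \<Rightarrow> bool" where
  "countably_tight T \<longleftrightarrow> (\<forall>A p. A \<subseteq> topspace T \<and> p \<in> T closure_of A \<longrightarrow>
      (\<exists>C. C \<subseteq> A \<and> countable C \<and> p \<in> T closure_of C))"

end

theory Submission
  imports Defs
begin

lemma gen_subset: "generate_topology_on B W \<Longrightarrow> W \<subseteq> \<Union>B"
  by (induction rule: generate_topology_on.induct) auto

lemma gen_basic:
  assumes "generate_topology_on B W" "p \<in> W"
  shows "\<exists>F. finite F \<and> F \<noteq> {} \<and> F \<subseteq> B \<and> p \<in> \<Inter>F \<and> \<Inter>F \<subseteq> W"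
  using assms
proof (induction arbitrary: p rule: generate_topology_on.induct)
  case Empty
  then show ?case by simp
next
  case (Int a b)
  from Int.IH(1)[of p] Int.prems obtain F1 where F1: "finite F1" "F1 \<noteq> {}" "F1 \<subseteq> B" "p \<in> \<Inter>F1" "\<Inter>F1 \<subseteq> a"
    by auto
  from Int.IH(2)[of p] Int.prems obtain F2 where F2: "finite F2" "F2 \<noteq> {}" "F2 \<subseteq> B" "p \<in> \<Inter>F2" "\<Inter>F2 \<subseteq> b"
    by auto
  have "\<Inter>(F1 \<union> F2) \<subseteq> a \<inter> b" using F1 F2 by auto
  then show ?case using F1 F2 by (intro exI[of _ "F1 \<union> F2"]) auto
next
  case (UN K)
  then obtain k where "k \<in> K" "p \<in> k" by auto
  from UN.IH[OF \<open>k \<in> K\<close> \<open>p \<in> k\<close>] obtain F where F: "finite F" "F \<noteq> {}" "F \<subseteq> B" "p \<in> \<Inter>F" "\<Inter>F \<subseteq> k" by blast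
  have "k \<subseteq> \<Union>K" using \<open>k \<in> K\<close> by (rule Union_upper)
  then have "\<Inter>F \<subseteq> \<Union>K" using F(5) by (rule subset_trans[rotated])
  then show ?case using F(1-4) by (intro exI[of _ F]) simp
next
  case (Basis s)
  then show ?case by (intro exI[of _ "{s}"]) auto
qed

lemma gen_image:
  assumes "generate_topology_on B W" "inj_on g (\<Union>B)"
  shows "generate_topology_on ((image g) ` B) (g ` W)"
  using assms
proof (induction rule: generate_topology_on.induct)
  case Empty
  then show ?case by (simp add: generate_topology_on.Empty)
next
  case (Int a b)
  have "a \<subseteq> \<Union>B" "b \<subseteq> \<Union>B" using Int.hyps gen_subset by auto
  then have "g ` (a \<inter> b) = g ` a \<inter> g ` b" using Int.prems
    by (simp add: inj_on_image_Int)
  then show ?case using Int by (simp add: generate_topology_on.Int)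
next
  case (UN K)
  have "g ` \<Union>K = \<Union>((image g) ` K)" by auto
  moreover have "generate_topology_on ((image g) ` B) (\<Union>((image g) ` K))"
  proof (rule generate_topology_on.UN)
    fix k assume "k \<in> (image g) ` K"
    then obtain k0 where "k0 \<in> K" "k = g ` k0" by auto
    then show "generate_topology_on ((image g) ` B) k" using UN.IH[of k0] UN.prems by simp
  qed
  ultimately show ?case by simp
next
  case (Basis s)
  then show ?case by (simp add: generate_topology_on.Basis)
qed

lemma homeo_generated:
  assumes inj: "inj_on g (\<Union>B)" and B': "B' = (image g) ` B"
  shows "homeomorphic_map (topology_generated_by B) (topology_generated_by B') g"
proof -
  define g' where "g' = inv_into (\<Union>B) g"
  have gg: "\<And>x. x \<in> \<Union>B \<Longrightarrow> g' (g x) = x" using inj by (simp add: g'_def)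
  have UB': "\<Union>B' = g ` \<Union>B" using B' by auto
  have g'g: "g (g' y) = y" if "y \<in> \<Union>B'" for y
  proof -
    have "y \<in> g ` (\<Union>B)" using that UB' by simp
    then obtain x where "x \<in> \<Union>B" "y = g x" by (meson imageE)
    then show ?thesis using gg by simp
  qed
  have inj': "inj_on g' (\<Union>B')" using g'g by (rule inj_on_inverseI)
  have BB: "(image g') ` B' = B"
  proof -
    have e: "\<And>U. U \<in> B \<Longrightarrow> g' ` g ` U = U"
    proof -
      fix U assume "U \<in> B"
      then have "\<And>x. x \<in> U \<Longrightarrow> g' (g x) = x" using gg by blast
      then show "g' ` g ` U = U" by (simp add: image_comp cong: image_cong)
    qed
    have "(image g') ` B' = (\<lambda>U. g' ` g ` U) ` B" using B' by (simp add: image_comp comp_def)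
    also have "\<dots> = B" using e by simp
    finally show ?thesis .
  qed
  have c1: "continuous_map (topology_generated_by B) (topology_generated_by B') g"
    unfolding continuous_map_def
  proof (intro conjI allI impI)
    show "g \<in> topspace (topology_generated_by B) \<rightarrow> topspace (topology_generated_by B')"
      using UB' by auto
    fix U assume "openin (topology_generated_by B') U"
    then have U: "generate_topology_on B' U" by (simp add: openin_topology_generated_by_iff)
    have "U \<subseteq> \<Union>B'" using gen_subset[OF U] .
    then have eq: "{x \<in> topspace (topology_generated_by B). g x \<in> U} = g' ` U"
    proof (intro equalityI subsetI)
      fix x assume "x \<in> {x \<in> topspace (topology_generated_by B). g x \<in> U}"
      then have "x \<in> \<Union>B" "g x \<in> U" by auto
      then show "x \<in> g' ` U" using gg by (metis image_eqI)
    next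
      fix x assume "x \<in> g' ` U"
      then obtain y where y: "y \<in> U" "x = g' y" by auto
      then have "y \<in> g ` \<Union>B" using \<open>U \<subseteq> \<Union>B'\<close> UB' by auto
      then obtain z where "z \<in> \<Union>B" "y = g z" by (meson imageE)
      then show "x \<in> {x \<in> topspace (topology_generated_by B). g x \<in> U}" using y gg by simp
    qed
    show "openin (topology_generated_by B) {x \<in> topspace (topology_generated_by B). g x \<in> U}"
      unfolding eq openin_topology_generated_by_iff using gen_image[OF U inj'] BB by simp
  qed
  have c2: "continuous_map (topology_generated_by B') (topology_generated_by B) g'"
    unfolding continuous_map_def
  proof (intro conjI allI impI)
    show "g' \<in> topspace (topology_generated_by B') \<rightarrow> topspace (topology_generated_by B)"
    proof
      fix y assume "y \<in> topspace (topology_generated_by B')"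
      then have "y \<in> g ` \<Union>B" using UB' by simp
      then obtain x where "x \<in> \<Union>B" "y = g x" by (meson imageE)
      then show "g' y \<in> topspace (topology_generated_by B)" using gg by simp
    qed
    fix U assume "openin (topology_generated_by B) U"
    then have U: "generate_topology_on B U" by (simp add: openin_topology_generated_by_iff)
    have "U \<subseteq> \<Union>B" using gen_subset[OF U] .
    then have eq: "{x \<in> topspace (topology_generated_by B'). g' x \<in> U} = g ` U"
    proof (intro equalityI subsetI)
      fix y assume "y \<in> {x \<in> topspace (topology_generated_by B'). g' x \<in> U}"
      then have "y \<in> \<Union>B'" "g' y \<in> U" by auto
      then show "y \<in> g ` U" using g'g by (metis image_eqI)
    next
      fix y assume "y \<in> g ` U"
      then obtain x where x: "x \<in> U" "y = g x" by auto
      then have "x \<in> \<Union>B" using \<open>U \<subseteq> \<Union>B\<close> by auto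
      then show "y \<in> {x \<in> topspace (topology_generated_by B'). g' x \<in> U}" using x gg UB' by simp
    qed
    show "openin (topology_generated_by B') {x \<in> topspace (topology_generated_by B'). g' x \<in> U}"
      unfolding eq openin_topology_generated_by_iff using gen_image[OF U inj] B' by simp
  qed
  have "homeomorphic_maps (topology_generated_by B) (topology_generated_by B') g g'"
    unfolding homeomorphic_maps_def using c1 c2 gg g'g by auto
  then show ?thesis unfolding homeomorphic_map_maps by blast
qed

lemma ct_homeo:
  assumes h: "homeomorphic_map X Y f" and ct: "countably_tight X"
  shows "countably_tight Y"
  unfolding countably_tight_def
proof (intro allI impI, elim conjE)
  fix A p assume A: "A \<subseteq> topspace Y" and p: "p \<in> Y closure_of A"
  have fim: "f ` topspace X = topspace Y" and inj: "inj_on f (topspace X)"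
    using h by (auto simp: homeomorphic_eq_everything_map)
  define A0 where "A0 = {x \<in> topspace X. f x \<in> A}"
  have A0a: "A0 \<subseteq> topspace X" by (auto simp: A0_def)
  have A0b: "f ` A0 = A"
  proof (intro equalityI subsetI)
    fix y assume "y \<in> f ` A0" then show "y \<in> A" by (auto simp: A0_def)
  next
    fix y assume "y \<in> A"
    then have "y \<in> f ` topspace X" using A fim by auto
    then obtain x where "x \<in> topspace X" "y = f x" by (meson imageE)
    then show "y \<in> f ` A0" using \<open>y \<in> A\<close> by (auto simp: A0_def)
  qed
  note A0 = A0a A0b
  have "p \<in> f ` (X closure_of A0)" using p homeomorphic_map_closure_of[OF h A0(1)] A0(2) by simp
  then obtain q where q: "q \<in> X closure_of A0" "p = f q" by auto
  have ct': "\<And>A p. A \<subseteq> topspace X \<Longrightarrow> p \<in> X closure_of A \<Longrightarrow> \<exists>C. C \<subseteq> A \<and> countable C \<and> p \<in> X closure_of C"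
    using ct unfolding countably_tight_def by auto
  obtain C0 where C0: "C0 \<subseteq> A0" "countable C0" "q \<in> X closure_of C0"
    using ct'[OF A0(1) q(1)] by auto
  have "C0 \<subseteq> topspace X" using C0(1) A0(1) by (rule subset_trans)
  from homeomorphic_map_closure_of[OF h this]
  have "Y closure_of (f ` C0) = f ` (X closure_of C0)" .
  then have "p \<in> Y closure_of (f ` C0)" using q C0 by simp
  moreover have "f ` C0 \<subseteq> A" using C0 A0 by auto
  moreover have "countable (f ` C0)" using C0(2) by simp
  ultimately show "\<exists>C\<subseteq>A. countable C \<and> p \<in> Y closure_of C" by (intro exI[of _ "f ` C0"]) simp
qed

lemma compact_Icc_gen:
  fixes a b :: "'a::{conditionally_complete_linorder, linorder_topology}"
  shows "compact {a..b}"
proof (cases "a \<le> b")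
  case False
  then show ?thesis by simp
next
  case ab: True
  show ?thesis
  proof (rule compactI)
    fix C assume Co: "\<forall>t\<in>C. open t" and Cc: "{a..b} \<subseteq> \<Union>C"
    define T where "T = {x. a \<le> x \<and> x \<le> b \<and> (\<exists>D\<subseteq>C. finite D \<and> {a..x} \<subseteq> \<Union>D)}"
    have aT: "a \<in> T"
    proof -
      obtain U where "U \<in> C" "a \<in> U" using Cc ab by auto
      then have "{U} \<subseteq> C" "finite {U}" "{a..a} \<subseteq> \<Union>{U}" by auto
      then show ?thesis unfolding T_def using ab by blast
    qed
    have bdd: "bdd_above T" unfolding T_def by (auto intro: bdd_aboveI[of _ b])
    define s where "s = Sup T"
    have as: "a \<le> s" using aT bdd by (simp add: cSup_upper s_def)
    have Tne: "T \<noteq> {}" using aT by auto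
    have sb: "s \<le> b" unfolding s_def by (rule cSup_least[OF Tne]) (auto simp: T_def)
    obtain U where U: "U \<in> C" "s \<in> U" using Cc as sb by auto
    have oU: "open U" using Co U by auto
    have sT: "s \<in> T"
    proof (cases "a < s")
      case False
      then show ?thesis using as aT by auto
    next
      case True
      obtain c where c: "c < s" "{c<..s} \<subseteq> U" using open_left[OF oU U(2) True] by auto
      obtain t where t: "t \<in> T" "c < t" using less_cSup_iff[of T c] aT bdd c(1) s_def by auto
      obtain D where D: "D \<subseteq> C" "finite D" "{a..t} \<subseteq> \<Union>D" using t(1) unfolding T_def by auto
      have "{a..s} \<subseteq> \<Union>(insert U D)"
      proof
        fix x assume "x \<in> {a..s}"
        then show "x \<in> \<Union>(insert U D)" using D c t(2) by (cases "x \<le> t") auto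
      qed
      moreover have "insert U D \<subseteq> C" "finite (insert U D)" using D U by auto
      ultimately show ?thesis unfolding T_def using as sb by blast
    qed
    obtain D where D: "D \<subseteq> C" "finite D" "{a..s} \<subseteq> \<Union>D" using sT unfolding T_def by auto
    have "s = b"
    proof (rule ccontr)
      assume "s \<noteq> b"
      then have "s < b" using sb by auto
      obtain d where d: "d > s" "{s..<d} \<subseteq> U" using open_right[OF oU U(2) \<open>s < b\<close>] by auto
      define e where "e = min d b"
      have se: "s < e" using d \<open>s < b\<close> by (simp add: e_def)
      show False
      proof (cases "\<exists>z. s < z \<and> z < e")
        case True
        then obtain z where z: "s < z" "z < e" by auto
        have "{a..z} \<subseteq> \<Union>(insert U D)"
        proof
          fix x assume "x \<in> {a..z}"
          show "x \<in> \<Union>(insert U D)"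
          proof (cases "x \<le> s")
            case True then show ?thesis using D \<open>x \<in> {a..z}\<close> by auto
          next
            case False
            then have "x \<in> {s..<d}" using \<open>x \<in> {a..z}\<close> z by (auto simp: e_def)
            then show ?thesis using d by auto
          qed
        qed
        moreover have "insert U D \<subseteq> C" "finite (insert U D)" using D U by auto
        moreover have "a \<le> z" "z \<le> b" using as z by (auto simp: e_def)
        ultimately have "z \<in> T" unfolding T_def by blast
        then have "z \<le> s" unfolding s_def using bdd by (rule cSup_upper)
        then show False using z(1) by simp
      next
        case False
        have "e \<in> {a..b}" using as se by (auto simp: e_def)
        then obtain V where V: "V \<in> C" "e \<in> V" using Cc by auto
        have "{a..e} \<subseteq> \<Union>(insert V D)"
        proof
          fix x assume "x \<in> {a..e}"
          then have "x \<le> s \<or> x = e" using False by (metis atLeastAtMost_iff le_less not_le)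
          then show "x \<in> \<Union>(insert V D)" using D V \<open>x \<in> {a..e}\<close> by auto
        qed
        moreover have "insert V D \<subseteq> C" "finite (insert V D)" using D V by auto
        moreover have "a \<le> e" "e \<le> b" using as se by (auto simp: e_def)
        ultimately have "e \<in> T" unfolding T_def by blast
        then have "e \<le> s" unfolding s_def using bdd by (rule cSup_upper)
        then show False using se by simp
      qed
    qed
    then have "{a..b} \<subseteq> \<Union>D" using D(3) by simp
    then show "\<exists>C'\<subseteq>C. finite C' \<and> {a..b} \<subseteq> \<Union>C'" using D(1,2) by blast
  qed
qed

locale LC =
  fixes S :: "'a::linear_continuum_topology set"
  assumes S_closed: "closed S"
    and S_conv: "\<And>x y z. x \<in> S \<Longrightarrow> z \<in> S \<Longrightarrow> x \<le> y \<Longrightarrow> y \<le> z \<Longrightarrow> y \<in> S"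
    and S_ne: "S \<noteq> {}"
    and S_nomax: "\<And>x. x \<in> S \<Longrightarrow> \<exists>y\<in>S. x < y"
    and S_bdd: "\<And>T. countable T \<Longrightarrow> T \<subseteq> S \<Longrightarrow> \<exists>l\<in>S. \<exists>u\<in>S. \<forall>t\<in>T. l \<le> t \<and> t \<le> u"
    and S_sep: "\<And>a b::'a. \<exists>D. countable D \<and> (\<forall>x y. a \<le> x \<longrightarrow> x < y \<longrightarrow> y \<le> b \<longrightarrow> (\<exists>d\<in>D. x < d \<and> d < y))"
begin

abbreviation "H \<equiv> homeo_cpt (top_of_set S)"

lemma H_props:
  assumes "f \<in> H"
  shows "continuous_on S f" "f ` S = S" "inj_on f S" "\<And>x. x \<notin> S \<Longrightarrow> f x = x"
    "compact (closure {x \<in> S. f x \<noteq> x})"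
proof -
  have h: "homeomorphic_map (top_of_set S) (top_of_set S) f"
    and fx: "\<And>x. x \<notin> S \<Longrightarrow> f x = x"
    and c: "compactin (top_of_set S) ((top_of_set S) closure_of {x \<in> S. f x \<noteq> x})"
    using assms by (auto simp: homeo_cpt_def)
  have "continuous_map (top_of_set S) (top_of_set S) f" using h homeomorphic_imp_continuous_map by blast
  then show "continuous_on S f" by simp
  show "f ` S = S" "inj_on f S" using h by (auto simp: homeomorphic_eq_everything_map)
  show "\<And>x. x \<notin> S \<Longrightarrow> f x = x" by (rule fx)
  have "(top_of_set S) closure_of {x \<in> S. f x \<noteq> x} = S \<inter> closure {x \<in> S. f x \<noteq> x}"
    unfolding closure_of_subtopology euclidean_closure_of
    by (metis (no_types, lifting) Int_absorb1 mem_Collect_eq subsetI)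
  also have "\<dots> = closure {x \<in> S. f x \<noteq> x}"
    using S_closed closure_minimal[of "{x \<in> S. f x \<noteq> x}" S] by auto
  finally show "compact (closure {x \<in> S. f x \<noteq> x})" using c by (simp add: compactin_subtopology)
qed

lemma H_supp:
  assumes "f \<in> H"
  shows "\<exists>a\<in>S. \<exists>b\<in>S. a \<le> b \<and> (\<forall>x. f x \<noteq> x \<longrightarrow> a \<le> x \<and> x \<le> b)"
proof -
  define K where "K = closure {x \<in> S. f x \<noteq> x}"
  have cK: "compact K" using H_props(5)[OF assms] by (simp add: K_def)
  have KS: "K \<subseteq> S" unfolding K_def using S_closed by (simp add: closure_minimal)
  have sub: "x \<in> K" if "f x \<noteq> x" for x
  proof -
    have "x \<in> S" using H_props(4)[OF assms] that by auto
    then have "x \<in> {x \<in> S. f x \<noteq> x}" using that by simp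
    then show ?thesis unfolding K_def using closure_subset by (rule subsetD[rotated])
  qed
  show ?thesis
  proof (cases "K = {}")
    case True
    obtain s where s: "s \<in> S" using S_ne by auto
    have "\<forall>x. f x \<noteq> x \<longrightarrow> s \<le> x \<and> x \<le> s"
    proof (intro allI impI)
      fix x assume "f x \<noteq> x" then have "x \<in> K" by (rule sub)
      then show "s \<le> x \<and> x \<le> s" using True by simp
    qed
    then show ?thesis using s by (intro bexI[of _ s]) simp_all
  next
    case False
    obtain a where a: "a \<in> K" "\<forall>t\<in>K. a \<le> t" using compact_attains_inf[OF cK False] by auto
    obtain b where b: "b \<in> K" "\<forall>t\<in>K. t \<le> b" using compact_attains_sup[OF cK False] by auto
    have ab: "a \<le> b" using a b by auto
    have "\<forall>x. f x \<noteq> x \<longrightarrow> a \<le> x \<and> x \<le> b"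
    proof (intro allI impI)
      fix x assume "f x \<noteq> x"
      then have "x \<in> K" by (rule sub)
      then show "a \<le> x \<and> x \<le> b" using a(2) b(2) by simp
    qed
    moreover have "a \<in> S" "b \<in> S" using a(1) b(1) KS by auto
    ultimately show ?thesis using ab by (intro bexI[of _ a] bexI[of _ b]) simp_all
  qed
qed

lemma H_mono:
  assumes "f \<in> H" "x \<in> S" "y \<in> S" "x < y"
  shows "f x < f y"
proof -
  note P = H_props[OF assms(1)]
  obtain a b where ab: "a \<in> S" "b \<in> S" "\<forall>z. f z \<noteq> z \<longrightarrow> a \<le> z \<and> z \<le> b"
    using H_supp[OF assms(1)] by blast
  have "max b y \<in> S" using ab(2) assms(3) by (simp add: max_def)
  then obtain v where v: "v \<in> S" "max b y < v" using S_nomax by blast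
  obtain w where w: "w \<in> S" "v < w" using S_nomax[OF v(1)] by auto
  have fix_ge: "f z = z" if "v \<le> z" for z
  proof (rule ccontr)
    assume "f z \<noteq> z"
    then have "z \<le> b" using ab(3) by simp
    moreover have "b < v" using v(2) by simp
    ultimately show False using that by simp
  qed
  have sub: "{u..t} \<subseteq> S" if "u \<in> S" "t \<in> S" for u t
  proof
    fix r assume "r \<in> {u..t}" then show "r \<in> S" using S_conv[OF that] by simp
  qed
  have lt_v: "f z < v" if "z \<in> S" "z < v" for z
  proof -
    have s: "{z..w} \<subseteq> S" using sub[OF that(1) w(1)] .
    have "continuous_on {z..w} f" using P(1) s by (rule continuous_on_subset)
    moreover have "inj_on f {z..w}" using P(3) s by (rule inj_on_subset)
    ultimately have "(f z < f v \<and> f v < f w) \<or> (f w < f v \<and> f v < f z)"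
      using continuous_inj_imp_mono[of z v w f] that(2) w(2) by simp
    moreover have "f v = v" "f w = w" using fix_ge w(2) by auto
    ultimately show ?thesis using w(2) by auto
  qed
  show ?thesis
  proof (cases "y < v")
    case True
    have s: "{x..v} \<subseteq> S" using sub[OF assms(2) v(1)] .
    have "continuous_on {x..v} f" using P(1) s by (rule continuous_on_subset)
    moreover have "inj_on f {x..v}" using P(3) s by (rule inj_on_subset)
    ultimately have "(f x < f y \<and> f y < f v) \<or> (f v < f y \<and> f y < f x)"
      using continuous_inj_imp_mono[of x y v f] assms(4) True by simp
    moreover have "f x < v" using lt_v[OF assms(2)] assms(4) True by simp
    moreover have "f v = v" using fix_ge by simp
    ultimately show ?thesis by auto
  next
    case False
    then have "v \<le> y" by simp
    then have "f y = y" by (rule fix_ge)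
    moreover have "f x < v"
    proof (cases "x < v")
      case True then show ?thesis using lt_v[OF assms(2)] by simp
    next
      case False then show ?thesis using assms(4) \<open>\<not> y < v\<close> v(2) by simp
    qed
    ultimately show ?thesis using \<open>v \<le> y\<close> by simp
  qed
qed

lemma H_inside:
  assumes "f \<in> H" "\<forall>z. f z \<noteq> z \<longrightarrow> a \<le> z \<and> z \<le> b" "x \<in> S" "a \<le> x" "x \<le> b"
  shows "a \<le> f x \<and> f x \<le> b"
proof (rule ccontr)
  note P = H_props[OF assms(1)]
  assume "\<not> (a \<le> f x \<and> f x \<le> b)"
  then have "f (f x) = f x" using assms(2) by force
  moreover have "f x \<in> S" using P(2) assms(3) by auto
  ultimately have "f x = x" using P(3) assms(3) by (meson inj_onD)
  then show False using \<open>\<not> (a \<le> f x \<and> f x \<le> b)\<close> assms(4,5) by simp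
qed

lemma H_fix_low:
  assumes "f \<in> H" "a \<in> S" "\<forall>y\<in>S. y < a \<longrightarrow> f y = y"
  shows "f a = a"
proof (rule ccontr)
  note P = H_props[OF assms(1)]
  assume ne: "f a \<noteq> a"
  show False
  proof (cases "f a < a")
    case True
    have "f a \<in> S" using P(2) assms(2) by auto
    then have "f (f a) = f a" using assms(3) True by auto
    then have "f a = a" using P(3) assms(2) \<open>f a \<in> S\<close> by (meson inj_onD)
    then show False using ne by simp
  next
    case False
    then have gt: "a < f a" using ne by auto
    obtain z where z: "z \<in> S" "f z = a" using P(2) assms(2) by (metis imageE)
    show False
    proof (cases "z < a")
      case True
      then show False using assms(3) z by auto
    next
      case False
      then have "z = a \<or> a < z" by auto
      then show False
      proof
        assume "z = a" then show False using z ne by simp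
      next
        assume "a < z"
        then have "f a < f z" using H_mono[OF assms(1) assms(2) z(1)] by simp
        then show False using z gt by simp
      qed
    qed
  qed
qed

end

context LC begin

abbreviation "TT \<equiv> compact_open_on H (top_of_set S)"

definition good_nb :: "('a \<Rightarrow> 'a) \<Rightarrow> ('a \<Rightarrow> 'a) set \<Rightarrow> 'a set \<Rightarrow> bool" where
  "good_nb p C L \<longleftrightarrow> (\<forall>P. finite P \<longrightarrow>
     (\<forall>KU\<in>P. compact (fst KU) \<and> fst KU \<subseteq> S \<inter> L \<and> openin (top_of_set S) (snd KU) \<and> p ` fst KU \<subseteq> snd KU)
     \<longrightarrow> (\<exists>f\<in>C. \<forall>KU\<in>P. f ` fst KU \<subseteq> snd KU))"

lemma TT_topspace: "topspace TT = H"
  unfolding compact_open_on_def by auto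

lemma TT_open_O:
  assumes "compact K" "K \<subseteq> S" "openin (top_of_set S) U"
  shows "openin TT {f \<in> H. f ` K \<subseteq> U}"
proof -
  have "compactin (top_of_set S) K" using assms by (simp add: compactin_subtopology)
  then have "{f \<in> H. f ` K \<subseteq> U} \<in> insert H {{f \<in> H. f ` K \<subseteq> U} | K U. compactin (top_of_set S) K \<and> openin (top_of_set S) U}"
    using assms(3) by blast
  then show ?thesis unfolding compact_open_on_def by (rule topology_generated_by_Basis)
qed

lemma TT_open_H: "openin TT H"
  using openin_topspace[of TT] TT_topspace by simp

lemma closure_from_good:
  assumes pH: "p \<in> H" and CH: "C \<subseteq> H" and g: "good_nb p C UNIV"
  shows "p \<in> TT closure_of C"
  unfolding in_closure_of
proof (intro conjI allI impI)
  show "p \<in> topspace TT" using pH TT_topspace by simp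
  fix W assume "p \<in> W \<and> openin TT W"
  then have pW: "p \<in> W" and oW: "openin TT W" by auto
  define SB where "SB = insert H {{f \<in> H. f ` K \<subseteq> U} | K U. compactin (top_of_set S) K \<and> openin (top_of_set S) U}"
  have "generate_topology_on SB W"
    using oW unfolding compact_open_on_def SB_def by (simp add: openin_topology_generated_by_iff)
  from gen_basic[OF this pW] obtain F where F: "finite F" "F \<subseteq> SB" "p \<in> \<Inter>F" "\<Inter>F \<subseteq> W" by blast
  define F' where "F' = F - {H}"
  have "\<forall>X\<in>F'. \<exists>KU. (\<forall>f. f \<in> X \<longleftrightarrow> f \<in> H \<and> f ` fst KU \<subseteq> snd KU) \<and> compactin (top_of_set S) (fst KU) \<and> openin (top_of_set S) (snd KU)"
  proof
    fix X assume "X \<in> F'"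
    then have "X \<in> SB" "X \<noteq> H" using F(2) F'_def by auto
    then obtain K U where "X = {f \<in> H. f ` K \<subseteq> U}" "compactin (top_of_set S) K" "openin (top_of_set S) U"
      unfolding SB_def by auto
    then show "\<exists>KU. (\<forall>f. f \<in> X \<longleftrightarrow> f \<in> H \<and> f ` fst KU \<subseteq> snd KU) \<and> compactin (top_of_set S) (fst KU) \<and> openin (top_of_set S) (snd KU)"
      by (intro exI[of _ "(K,U)"]) simp
  qed
  from bchoice[OF this] obtain r where r: "\<forall>X\<in>F'. (\<forall>f. f \<in> X \<longleftrightarrow> f \<in> H \<and> f ` fst (r X) \<subseteq> snd (r X)) \<and> compactin (top_of_set S) (fst (r X)) \<and> openin (top_of_set S) (snd (r X))"
    by (elim exE) (rule that)
  have rmem: "\<And>X f. X \<in> F' \<Longrightarrow> f \<in> X \<longleftrightarrow> f \<in> H \<and> f ` fst (r X) \<subseteq> snd (r X)" using r by simp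
  have rK: "\<And>X. X \<in> F' \<Longrightarrow> compact (fst (r X)) \<and> fst (r X) \<subseteq> S" using r by (simp add: compactin_subtopology)
  have rU: "\<And>X. X \<in> F' \<Longrightarrow> openin (top_of_set S) (snd (r X))" using r by simp
  define P where "P = r ` F'"
  have "finite P" using F(1) unfolding P_def F'_def by simp
  moreover have "\<forall>KU\<in>P. compact (fst KU) \<and> fst KU \<subseteq> S \<inter> UNIV \<and> openin (top_of_set S) (snd KU) \<and> p ` fst KU \<subseteq> snd KU"
  proof
    fix KU assume "KU \<in> P"
    then obtain X where X: "X \<in> F'" "KU = r X" unfolding P_def by auto
    have "p \<in> X" using F(3) X(1) F'_def by auto
    then have "p ` fst KU \<subseteq> snd KU" using rmem[OF X(1)] X(2) by simp
    then show "compact (fst KU) \<and> fst KU \<subseteq> S \<inter> UNIV \<and> openin (top_of_set S) (snd KU) \<and> p ` fst KU \<subseteq> snd KU"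
      using rK[OF X(1)] rU[OF X(1)] X(2) by simp
  qed
  ultimately obtain f where f: "f \<in> C" "\<forall>KU\<in>P. f ` fst KU \<subseteq> snd KU"
    using g unfolding good_nb_def by meson
  have "f \<in> \<Inter>F"
  proof
    fix X assume "X \<in> F"
    show "f \<in> X"
    proof (cases "X = H")
      case True then show ?thesis using f(1) CH by auto
    next
      case False
      then have "X \<in> F'" using \<open>X \<in> F\<close> F'_def by auto
      then have "r X \<in> P" unfolding P_def by auto
      then have "f ` fst (r X) \<subseteq> snd (r X)" using f(2) by auto
      moreover have "f \<in> H" using f(1) CH by auto
      ultimately show ?thesis using rmem[OF \<open>X \<in> F'\<close>] by simp
    qed
  qed
  then show "\<exists>y. y \<in> C \<and> y \<in> W" using f(1) F(4) by auto
qed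

end

context LC begin

lemma local_step:
  assumes AH: "A \<subseteq> H" and pc: "p \<in> TT closure_of A" and aS: "a \<in> S" and bS: "b \<in> S" and ab: "a \<le> b"
  shows "\<exists>C. countable C \<and> C \<subseteq> A \<and> good_nb p C {a..b}"
proof -
  have pH: "p \<in> H" using pc TT_topspace in_closure_of[of p TT A] by simp
  have meets: "\<exists>f\<in>A. f \<in> W" if "openin TT W" "p \<in> W" for W
  proof -
    have "\<forall>T. p \<in> T \<and> openin TT T \<longrightarrow> (\<exists>y. y \<in> A \<and> y \<in> T)" using pc in_closure_of[of p TT A] by simp
    then have "\<exists>y. y \<in> A \<and> y \<in> W" using that by simp
    then show ?thesis by (elim exE conjE) (rule bexI)
  qed
  note P = H_props[OF pH]
  have LS: "{a..b} \<subseteq> S"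
  proof
    fix x assume "x \<in> {a..b}" then show "x \<in> S" using S_conv[OF aS bS] by simp
  qed
  define K0 where "K0 = {a..b} \<union> p ` {a..b}"
  have cK0: "compact K0"
  proof -
    have "continuous_on {a..b} p" using P(1) LS by (rule continuous_on_subset)
    then have "compact (p ` {a..b})" using compact_Icc_gen[of a b] by (rule compact_continuous_image)
    then show ?thesis unfolding K0_def using compact_Icc_gen by (intro compact_Un)
  qed
  have K0S: "K0 \<subseteq> S"
  proof -
    have "p ` {a..b} \<subseteq> p ` S" using LS by (rule image_mono)
    then show ?thesis unfolding K0_def using LS P(2) by simp
  qed
  have K0ne: "K0 \<noteq> {}" using ab unfolding K0_def by auto
  obtain a' where a': "a' \<in> K0" "\<forall>t\<in>K0. a' \<le> t" using compact_attains_inf[OF cK0 K0ne] by blast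
  obtain b' where b': "b' \<in> K0" "\<forall>t\<in>K0. t \<le> b'" using compact_attains_sup[OF cK0 K0ne] by blast
  have a'S: "a' \<in> S" and b'S: "b' \<in> S" using a'(1) b'(1) K0S by auto
  have aa': "a' \<le> a" and bb': "b \<le> b'" using a'(2) b'(2) ab unfolding K0_def by auto
  have pK0: "a' \<le> p x \<and> p x \<le> b'" if "x \<in> {a..b}" for x
  proof -
    have "p x \<in> K0" unfolding K0_def using that by simp
    then show ?thesis using a'(2) b'(2) by simp
  qed
  define a'' where "a'' = (if \<exists>y. y < a' then (SOME y. y < a') else a')"
  have a''1: "a'' \<le> a'"
  proof (cases "\<exists>y. y < a'")
    case True then have "(SOME y. y < a') < a'" by (rule someI_ex)
    then show ?thesis using True unfolding a''_def by simp
  next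
    case False then show ?thesis unfolding a''_def by simp
  qed
  have a''2: "a'' < a'" if "\<exists>y. y < a'"
  proof -
    have "(SOME y. y < a') < a'" using that by (rule someI_ex)
    then show ?thesis using that unfolding a''_def by simp
  qed
  obtain b'' where b'': "b'' \<in> S" "b' < b''" using S_nomax[OF b'S] by blast
  have "\<exists>D. countable D \<and> (\<forall>x y. a'' \<le> x \<longrightarrow> x < y \<longrightarrow> y \<le> b'' \<longrightarrow> (\<exists>d\<in>D. x < d \<and> d < y))"
    by (rule S_sep)
  then obtain D where D: "countable D" "\<And>x y. a'' \<le> x \<Longrightarrow> x < y \<Longrightarrow> y \<le> b'' \<Longrightarrow> \<exists>d\<in>D. x < d \<and> d < y"
    by blast
  define BB where "BB = (\<lambda>(d1,d2). ({d1<..<d2}, {d1..d2})) ` (D \<times> D) \<union> (\<lambda>d. ({..<d}, {..d})) ` {d\<in>D. compact {..d}}"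
  have BBc: "countable BB" unfolding BB_def using D(1) by simp
  have BBp: "open (fst BJ) \<and> compact (snd BJ) \<and> fst BJ \<subseteq> snd BJ" if BJin: "BJ \<in> BB" for BJ
  proof -
    consider (a) d1 d2 where "BJ = ({d1<..<d2}, {d1..d2})" | (b) d where "BJ = ({..<d}, {..d})" "compact {..d}"
      using BJin unfolding BB_def by auto
    then show ?thesis
    proof cases
      case a then show ?thesis using compact_Icc_gen by auto
    next
      case b then show ?thesis by auto
    qed
  qed
  have nb: "\<exists>BJ\<in>BB. x \<in> fst BJ \<and> snd BJ \<subseteq> V" if x: "a' \<le> x" "x \<le> b'" and V: "open V" "x \<in> V" for x V
  proof -
    have xb'': "x < b''" using x(2) b''(2) by simp
    obtain u where u: "x < u" "{x..<u} \<subseteq> V" using open_right[OF V xb''] by blast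
    define u' where "u' = min u b''"
    have "x < u'" using u(1) xb'' unfolding u'_def by simp
    moreover have "a'' \<le> x" using a''1 x(1) by simp
    moreover have "u' \<le> b''" unfolding u'_def by simp
    ultimately obtain d2 where d2: "d2 \<in> D" "x < d2" "d2 < u'" using D(2) by blast
    have d2u: "d2 < u" using d2(3) unfolding u'_def by simp
    show ?thesis
    proof (cases "\<exists>y. y < x")
      case True
      then obtain y where "y < x" by blast
      obtain l where l: "l < x" "{l<..x} \<subseteq> V" using open_left[OF V \<open>y < x\<close>] by blast
      have a''x: "a'' < x"
      proof (cases "a' < x")
        case True then show ?thesis using a''1 by simp
      next
        case False
        then have "x = a'" using x(1) by simp
        then show ?thesis using a''2 True by simp
      qed
      define l' where "l' = max l a''"
      have "l' < x" unfolding l'_def using l(1) a''x by simp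
      moreover have "a'' \<le> l'" unfolding l'_def by simp
      moreover have "x \<le> b''" using xb'' by simp
      ultimately obtain d1 where d1: "d1 \<in> D" "l' < d1" "d1 < x" using D(2) by blast
      have ll: "l < d1" using d1(2) unfolding l'_def by simp
      have inBB: "({d1<..<d2}, {d1..d2}) \<in> BB" unfolding BB_def using d1(1) d2(1) by force
      have sub: "{d1..d2} \<subseteq> V"
      proof
        fix z assume z: "z \<in> {d1..d2}"
        show "z \<in> V"
        proof (cases "z \<le> x")
          case True
          then have "z \<in> {l<..x}" using z ll by (auto intro: less_le_trans)
          then show ?thesis using l(2) by blast
        next
          case False
          then have "z \<in> {x..<u}" using z d2u by (auto intro: le_less_trans)
          then show ?thesis using u(2) by blast
        qed
      qed
      have "x \<in> {d1<..<d2}" using d1(3) d2(2) by simp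
      then show ?thesis using inBB sub by (intro bexI[of _ "({d1<..<d2}, {d1..d2})"]) simp_all
    next
      case False
      then have ge: "\<And>z. x \<le> z" by (simp add: not_less)
      have eq: "{..d2} = {x..d2}" using ge by auto
      have "compact {..d2}" unfolding eq by (rule compact_Icc_gen)
      then have inBB: "({..<d2}, {..d2}) \<in> BB" unfolding BB_def using d2(1) by force
      have sub: "{..d2} \<subseteq> V"
      proof
        fix z assume z: "z \<in> {..d2}"
        then have "z \<in> {x..<u}" using ge[of z] d2u by (auto intro: le_less_trans)
        then show "z \<in> V" using u(2) by blast
      qed
      have "x \<in> {..<d2}" using d2(2) by simp
      then show ?thesis using inBB sub by (intro bexI[of _ "({..<d2}, {..d2})"]) simp_all
    qed
  qed
  define NN where "NN = {F. finite F \<and> F \<subseteq> BB \<times> BB \<and> (\<forall>q\<in>F. p ` (snd (fst q) \<inter> S) \<subseteq> fst (snd q))}"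
  have NNc: "countable NN"
  proof (rule countable_subset)
    show "NN \<subseteq> {F. finite F \<and> F \<subseteq> BB \<times> BB}" unfolding NN_def by auto
    show "countable {F. finite F \<and> F \<subseteq> BB \<times> BB}" using BBc by (intro countable_Collect_finite_subset) simp
  qed
  have "\<forall>F\<in>NN. \<exists>f. f \<in> A \<and> (\<forall>q\<in>F. f ` (snd (fst q) \<inter> S) \<subseteq> fst (snd q) \<inter> S)"
  proof
    fix F assume F: "F \<in> NN"
    define W where "W = \<Inter>(insert H ((\<lambda>q. {f\<in>H. f ` (snd (fst q) \<inter> S) \<subseteq> fst (snd q) \<inter> S}) ` F))"
    have oW: "openin TT W" unfolding W_def
    proof (rule openin_Inter)
      show "finite (insert H ((\<lambda>q. {f\<in>H. f ` (snd (fst q) \<inter> S) \<subseteq> fst (snd q) \<inter> S}) ` F))"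
        using F unfolding NN_def by simp
      show "insert H ((\<lambda>q. {f\<in>H. f ` (snd (fst q) \<inter> S) \<subseteq> fst (snd q) \<inter> S}) ` F) \<noteq> {}" by simp
      fix X assume X: "X \<in> insert H ((\<lambda>q. {f\<in>H. f ` (snd (fst q) \<inter> S) \<subseteq> fst (snd q) \<inter> S}) ` F)"
      show "openin TT X"
      proof (cases "X = H")
        case True then show ?thesis using TT_open_H by simp
      next
        case False
        then obtain q where q: "q \<in> F" "X = {f\<in>H. f ` (snd (fst q) \<inter> S) \<subseteq> fst (snd q) \<inter> S}" using X by auto
        have qB: "fst q \<in> BB" "snd q \<in> BB" using q(1) F unfolding NN_def by auto
        have "compact (snd (fst q) \<inter> S)" using BBp[OF qB(1)] S_closed by (intro compact_Int_closed) simp_all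
        moreover have "snd (fst q) \<inter> S \<subseteq> S" by simp
        moreover have "openin (top_of_set S) (fst (snd q) \<inter> S)"
          using BBp[OF qB(2)] by (simp add: openin_open Int_commute) blast
        ultimately show ?thesis unfolding q(2) by (rule TT_open_O)
      qed
    qed
    have pW: "p \<in> W" unfolding W_def
    proof
      fix X assume X: "X \<in> insert H ((\<lambda>q. {f\<in>H. f ` (snd (fst q) \<inter> S) \<subseteq> fst (snd q) \<inter> S}) ` F)"
      show "p \<in> X"
      proof (cases "X = H")
        case True then show ?thesis using pH by simp
      next
        case False
        then obtain q where q: "q \<in> F" "X = {f\<in>H. f ` (snd (fst q) \<inter> S) \<subseteq> fst (snd q) \<inter> S}" using X by auto
        have "p ` (snd (fst q) \<inter> S) \<subseteq> fst (snd q)" using q(1) F unfolding NN_def by auto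
        moreover have "p ` (snd (fst q) \<inter> S) \<subseteq> S" using P(2) by auto
        ultimately show ?thesis unfolding q(2) using pH by simp
      qed
    qed
    obtain f where f: "f \<in> A" "f \<in> W" using meets[OF oW pW] by blast
    have "\<forall>q\<in>F. f ` (snd (fst q) \<inter> S) \<subseteq> fst (snd q) \<inter> S"
    proof
      fix q assume "q \<in> F"
      then have "{f\<in>H. f ` (snd (fst q) \<inter> S) \<subseteq> fst (snd q) \<inter> S} \<in> insert H ((\<lambda>q. {f\<in>H. f ` (snd (fst q) \<inter> S) \<subseteq> fst (snd q) \<inter> S}) ` F)"
        by simp
      then have "f \<in> {f\<in>H. f ` (snd (fst q) \<inter> S) \<subseteq> fst (snd q) \<inter> S}" using f(2) unfolding W_def by (rule InterD[rotated])
      then show "f ` (snd (fst q) \<inter> S) \<subseteq> fst (snd q) \<inter> S" by simp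
    qed
    then show "\<exists>f. f \<in> A \<and> (\<forall>q\<in>F. f ` (snd (fst q) \<inter> S) \<subseteq> fst (snd q) \<inter> S)" using f(1) by blast
  qed
  from bchoice[OF this] obtain g where g: "\<forall>F\<in>NN. g F \<in> A \<and> (\<forall>q\<in>F. g F ` (snd (fst q) \<inter> S) \<subseteq> fst (snd q) \<inter> S)"
    by (elim exE) (rule that)
  define C where "C = g ` NN"
  have Cc: "countable C" unfolding C_def using NNc by simp
  have CA: "C \<subseteq> A" unfolding C_def using g by auto
  have "good_nb p C {a..b}" unfolding good_nb_def
  proof (intro allI impI)
    fix PP :: "('a set \<times> 'a set) set"
    assume fP: "finite PP"
      and PP: "\<forall>KU\<in>PP. compact (fst KU) \<and> fst KU \<subseteq> S \<inter> {a..b} \<and> openin (top_of_set S) (snd KU) \<and> p ` fst KU \<subseteq> snd KU"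
    have pick: "\<exists>G. G \<in> NN \<and> (\<forall>q\<in>G. fst (snd q) \<inter> S \<subseteq> snd KU) \<and> fst KU \<subseteq> (\<Union>q\<in>G. fst (fst q))"
      if KU: "KU \<in> PP" for KU
    proof -
      define K where "K = fst KU"
      define U where "U = snd KU"
      have cK: "compact K" and KS: "K \<subseteq> S \<inter> {a..b}" and oU: "openin (top_of_set S) U" and pKU: "p ` K \<subseteq> U"
        using PP KU unfolding K_def U_def by auto
      obtain V where V: "open V" "U = S \<inter> V" using oU by (auto simp: openin_open)
      have "\<forall>x\<in>K. \<exists>q. q \<in> BB \<times> BB \<and> x \<in> fst (fst q) \<and> p ` (snd (fst q) \<inter> S) \<subseteq> fst (snd q) \<and> fst (snd q) \<subseteq> V"
      proof
        fix x assume xK: "x \<in> K"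
        have xS: "x \<in> S" and xab: "x \<in> {a..b}" using xK KS by auto
        have xa'b': "a' \<le> x" "x \<le> b'" using xab aa' bb' by auto
        have pxV: "p x \<in> V" using pKU xK V(2) by auto
        obtain \<beta>2 where \<beta>2: "\<beta>2 \<in> BB" "p x \<in> fst \<beta>2" "snd \<beta>2 \<subseteq> V"
          using nb[OF _ _ V(1) pxV] pK0[OF xab] by blast
        have "open (fst \<beta>2)" using BBp[OF \<beta>2(1)] by simp
        then obtain W where W: "open W" "W \<inter> S = p -` fst \<beta>2 \<inter> S"
          using P(1) unfolding continuous_on_open_invariant by blast
        have xW: "x \<in> W" using W(2) xS \<beta>2(2) by blast
        obtain \<beta>1 where \<beta>1: "\<beta>1 \<in> BB" "x \<in> fst \<beta>1" "snd \<beta>1 \<subseteq> W"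
          using nb[OF xa'b' W(1) xW] by blast
        have im: "p ` (snd \<beta>1 \<inter> S) \<subseteq> fst \<beta>2"
        proof
          fix z assume "z \<in> p ` (snd \<beta>1 \<inter> S)"
          then obtain y where y: "y \<in> snd \<beta>1" "y \<in> S" "z = p y" by auto
          then have "y \<in> W \<inter> S" using \<beta>1(3) by auto
          then show "z \<in> fst \<beta>2" using W(2) y(3) by auto
        qed
        have "fst \<beta>2 \<subseteq> V" using BBp[OF \<beta>2(1)] \<beta>2(3) by auto
        then show "\<exists>q. q \<in> BB \<times> BB \<and> x \<in> fst (fst q) \<and> p ` (snd (fst q) \<inter> S) \<subseteq> fst (snd q) \<and> fst (snd q) \<subseteq> V"
          using \<beta>1 \<beta>2 im by (intro exI[of _ "(\<beta>1, \<beta>2)"]) simp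
      qed
      from bchoice[OF this] obtain qf where qf: "\<forall>x\<in>K. qf x \<in> BB \<times> BB \<and> x \<in> fst (fst (qf x)) \<and> p ` (snd (fst (qf x)) \<inter> S) \<subseteq> fst (snd (qf x)) \<and> fst (snd (qf x)) \<subseteq> V"
        by (elim exE) (rule that)
      have opn: "open (fst (fst (qf x)))" if "x \<in> K" for x
      proof -
        have "fst (qf x) \<in> BB" using qf that by auto
        then show ?thesis using BBp by simp
      qed
      have cov: "K \<subseteq> (\<Union>x\<in>K. fst (fst (qf x)))" using qf by auto
      obtain K' where K': "K' \<subseteq> K" "finite K'" "K \<subseteq> (\<Union>x\<in>K'. fst (fst (qf x)))"
        using compactE_image[OF cK opn cov] by blast
      define G where "G = qf ` K'"
      have qf': "qf x \<in> BB \<times> BB \<and> p ` (snd (fst (qf x)) \<inter> S) \<subseteq> fst (snd (qf x)) \<and> fst (snd (qf x)) \<subseteq> V"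
        if "x \<in> K'" for x
        using qf K'(1) that by blast
      have "G \<in> NN" unfolding NN_def G_def
      proof (intro CollectI conjI)
        show "finite (qf ` K')" using K'(2) by simp
        show "qf ` K' \<subseteq> BB \<times> BB" using qf' by blast
        show "\<forall>q\<in>qf ` K'. p ` (snd (fst q) \<inter> S) \<subseteq> fst (snd q)" using qf' by blast
      qed
      moreover have "\<forall>q\<in>G. fst (snd q) \<inter> S \<subseteq> snd KU"
      proof
        fix q assume "q \<in> G"
        then obtain x where "x \<in> K'" "q = qf x" unfolding G_def by blast
        then have "fst (snd q) \<subseteq> V" using qf' by blast
        then show "fst (snd q) \<inter> S \<subseteq> snd KU" unfolding U_def[symmetric] V(2) by blast
      qed
      moreover have "fst KU \<subseteq> (\<Union>q\<in>G. fst (fst q))" unfolding G_def K_def[symmetric] using K'(3) by auto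
      ultimately show ?thesis by blast
    qed
    have "\<forall>KU\<in>PP. \<exists>G. G \<in> NN \<and> (\<forall>q\<in>G. fst (snd q) \<inter> S \<subseteq> snd KU) \<and> fst KU \<subseteq> (\<Union>q\<in>G. fst (fst q))"
      using pick by blast
    from bchoice[OF this] obtain Gf where Gf: "\<forall>KU\<in>PP. Gf KU \<in> NN \<and> (\<forall>q\<in>Gf KU. fst (snd q) \<inter> S \<subseteq> snd KU) \<and> fst KU \<subseteq> (\<Union>q\<in>Gf KU. fst (fst q))"
      by (elim exE) (rule that)
    define F where "F = \<Union>(Gf ` PP)"
    have "F \<in> NN" unfolding NN_def F_def
    proof (intro CollectI conjI)
      show "finite (\<Union>(Gf ` PP))" using fP Gf unfolding NN_def by auto
      show "\<Union>(Gf ` PP) \<subseteq> BB \<times> BB" using Gf unfolding NN_def by blast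
      show "\<forall>q\<in>\<Union>(Gf ` PP). p ` (snd (fst q) \<inter> S) \<subseteq> fst (snd q)" using Gf unfolding NN_def by blast
    qed
    then have gF: "g F \<in> C" "\<forall>q\<in>F. g F ` (snd (fst q) \<inter> S) \<subseteq> fst (snd q) \<inter> S" using g unfolding C_def by auto
    have "\<forall>KU\<in>PP. g F ` fst KU \<subseteq> snd KU"
    proof (intro ballI subsetI)
      fix KU z assume KU: "KU \<in> PP" and z: "z \<in> g F ` fst KU"
      then obtain y where y: "y \<in> fst KU" "z = g F y" by auto
      have yS: "y \<in> S" using PP KU y(1) by auto
      obtain q where q: "q \<in> Gf KU" "y \<in> fst (fst q)" using Gf KU y(1) by blast
      have qF: "q \<in> F" unfolding F_def using q(1) KU by auto
      have qB: "fst q \<in> BB" using qF \<open>F \<in> NN\<close> unfolding NN_def by auto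
      have "y \<in> snd (fst q) \<inter> S" using BBp[OF qB] q(2) yS by auto
      then have "g F y \<in> fst (snd q) \<inter> S" using gF(2) qF by auto
      moreover have "fst (snd q) \<inter> S \<subseteq> snd KU" using Gf KU q(1) by auto
      ultimately show "z \<in> snd KU" using y(2) by auto
    qed
    then show "\<exists>f\<in>C. \<forall>KU\<in>PP. f ` fst KU \<subseteq> snd KU" using gF(1) by blast
  qed
  then show ?thesis using Cc CA by blast
qed

end

context LC begin

lemma step2:
  assumes AH: "A \<subseteq> H" and pc: "p \<in> TT closure_of A" and aS: "a \<in> S" and bS: "b \<in> S" and ab: "a \<le> b"
  shows "\<exists>r. countable (fst r) \<and> fst r \<subseteq> A \<and> good_nb p (fst r) {a..b} \<and> fst (snd r) \<in> S \<and> snd (snd r) \<in> S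
     \<and> fst (snd r) \<le> a \<and> b \<le> snd (snd r) \<and> (\<forall>f\<in>fst r. \<forall>x. f x \<noteq> x \<longrightarrow> fst (snd r) \<le> x \<and> x \<le> snd (snd r))"
proof -
  obtain C where C: "countable C" "C \<subseteq> A" "good_nb p C {a..b}" using local_step[OF assms] by blast
  have "\<forall>f\<in>C. \<exists>s. fst s \<in> S \<and> snd s \<in> S \<and> (\<forall>x. f x \<noteq> x \<longrightarrow> fst s \<le> x \<and> x \<le> snd s)"
  proof
    fix f assume "f \<in> C"
    then have "f \<in> H" using C(2) AH by auto
    from H_supp[OF this] obtain a1 b1 where "a1 \<in> S" "b1 \<in> S" "\<forall>x. f x \<noteq> x \<longrightarrow> a1 \<le> x \<and> x \<le> b1" by blast
    then show "\<exists>s. fst s \<in> S \<and> snd s \<in> S \<and> (\<forall>x. f x \<noteq> x \<longrightarrow> fst s \<le> x \<and> x \<le> snd s)"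
      by (intro exI[of _ "(a1,b1)"]) simp
  qed
  from bchoice[OF this] obtain sf where sf: "\<forall>f\<in>C. fst (sf f) \<in> S \<and> snd (sf f) \<in> S \<and> (\<forall>x. f x \<noteq> x \<longrightarrow> fst (sf f) \<le> x \<and> x \<le> snd (sf f))"
    by (elim exE) (rule that)
  define T0 where "T0 = insert a (insert b ((fst \<circ> sf) ` C \<union> (snd \<circ> sf) ` C))"
  have "countable T0" unfolding T0_def using C(1) by simp
  moreover have "T0 \<subseteq> S" unfolding T0_def using sf aS bS by auto
  ultimately obtain l u where lu: "l \<in> S" "u \<in> S" "\<forall>t\<in>T0. l \<le> t \<and> t \<le> u" using S_bdd by blast
  have la: "l \<le> a" and bu: "b \<le> u" using lu(3) unfolding T0_def by auto
  have supp: "\<forall>f\<in>C. \<forall>x. f x \<noteq> x \<longrightarrow> l \<le> x \<and> x \<le> u"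
  proof (intro ballI allI impI)
    fix f x assume f: "f \<in> C" and fx: "f x \<noteq> x"
    have "fst (sf f) \<in> T0" "snd (sf f) \<in> T0" unfolding T0_def using f by auto
    then have "l \<le> fst (sf f)" "snd (sf f) \<le> u" using lu(3) by auto
    moreover have "fst (sf f) \<le> x \<and> x \<le> snd (sf f)" using sf f fx by blast
    ultimately show "l \<le> x \<and> x \<le> u" by auto
  qed
  show ?thesis using C lu(1,2) la bu supp by (intro exI[of _ "(C, l, u)"]) simp
qed

end

context LC begin

theorem TT_countably_tight: "countably_tight TT"
  unfolding countably_tight_def
proof (intro allI impI, elim conjE)
  fix A p assume A: "A \<subseteq> topspace TT" and pc: "p \<in> TT closure_of A"
  have AH: "A \<subseteq> H" using A TT_topspace by simp
  have pH: "p \<in> H" using pc TT_topspace in_closure_of[of p TT A] by simp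
  note PP = H_props[OF pH]
  obtain sa sb where sab: "sa \<in> S" "sb \<in> S" "sa \<le> sb" "\<forall>x. p x \<noteq> x \<longrightarrow> sa \<le> x \<and> x \<le> sb"
    using H_supp[OF pH] by blast
  obtain b0 where b0: "b0 \<in> S" "sb < b0" using S_nomax[OF sab(2)] by blast
  define a0 where "a0 = sa"
  have a0S: "a0 \<in> S" and a0b0: "a0 < b0" using sab b0 unfolding a0_def by auto
  have pfix_lo: "p x = x" if "x \<in> S" "x \<le> a0" for x
  proof (cases "x < a0")
    case True then show ?thesis using sab(4) unfolding a0_def by force
  next
    case False
    then have "x = a0" using that(2) by simp
    moreover have "\<forall>y\<in>S. y < a0 \<longrightarrow> p y = y" using sab(4) unfolding a0_def by force
    ultimately show ?thesis using H_fix_low[OF pH a0S] by simp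
  qed
  have pfix_hi: "p x = x" if "b0 \<le> x" for x
  proof (rule ccontr)
    assume "p x \<noteq> x"
    then have "x \<le> sb" using sab(4) by simp
    then show False using that b0(2) by simp
  qed
  define Q where "Q = (\<lambda>ab::'a \<times> 'a. \<lambda>r::('a \<Rightarrow> 'a) set \<times> 'a \<times> 'a.
      countable (fst r) \<and> fst r \<subseteq> A \<and> good_nb p (fst r) {fst ab..snd ab} \<and> fst (snd r) \<in> S \<and> snd (snd r) \<in> S
     \<and> fst (snd r) \<le> fst ab \<and> snd ab \<le> snd (snd r) \<and> (\<forall>f\<in>fst r. \<forall>x. f x \<noteq> x \<longrightarrow> fst (snd r) \<le> x \<and> x \<le> snd (snd r)))"
  define nxt where "nxt = (\<lambda>ab. SOME r. Q ab r)"
  define sq where "sq = rec_nat (a0, b0) (\<lambda>n ab. snd (nxt ab))"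
  have sq0: "sq 0 = (a0, b0)" unfolding sq_def by simp
  have sqS: "sq (Suc n) = snd (nxt (sq n))" for n unfolding sq_def by simp
  have inv: "fst (sq n) \<in> S \<and> snd (sq n) \<in> S \<and> fst (sq n) \<le> snd (sq n) \<and> Q (sq n) (nxt (sq n))" for n
  proof (induction n)
    case 0
    have "\<exists>r. Q (a0, b0) r" unfolding Q_def using step2[OF AH pc a0S b0(1)] a0b0 by simp
    then have "Q (a0, b0) (nxt (a0, b0))" unfolding nxt_def by (rule someI_ex)
    then show ?case using sq0 a0S b0(1) a0b0 by simp
  next
    case (Suc n)
    have q: "Q (sq n) (nxt (sq n))" using Suc by simp
    have i1: "fst (sq (Suc n)) \<in> S" "snd (sq (Suc n)) \<in> S" using q unfolding sqS Q_def by simp_all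
    have "fst (sq (Suc n)) \<le> fst (sq n)" "snd (sq n) \<le> snd (sq (Suc n))" using q unfolding sqS Q_def by simp_all
    then have i2: "fst (sq (Suc n)) \<le> snd (sq (Suc n))" using Suc by (meson order_trans)
    have "\<exists>r. Q (sq (Suc n)) r" unfolding Q_def using step2[OF AH pc i1 i2] by simp
    then have "Q (sq (Suc n)) (nxt (sq (Suc n)))" unfolding nxt_def by (rule someI_ex)
    then show ?case using i1 i2 by simp
  qed
  define an where "an n = fst (sq n)" for n
  define bn where "bn n = snd (sq n)" for n
  define Cn where "Cn n = fst (nxt (sq n))" for n
  have anS: "an n \<in> S" and bnS: "bn n \<in> S" and anbn: "an n \<le> bn n" for n using inv unfolding an_def bn_def by auto
  have Qn: "Q (sq n) (nxt (sq n))" for n using inv by simp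
  have Cc: "countable (Cn n)" and CnA: "Cn n \<subseteq> A" and Cg: "good_nb p (Cn n) {an n..bn n}" for n
    using Qn[of n] unfolding Q_def Cn_def an_def bn_def by simp_all
  have an_step: "an (Suc n) \<le> an n" and bn_step: "bn n \<le> bn (Suc n)" for n
    using Qn[of n] unfolding Q_def an_def bn_def sqS by simp_all
  have Csupp: "\<forall>f\<in>Cn n. \<forall>x. f x \<noteq> x \<longrightarrow> an (Suc n) \<le> x \<and> x \<le> bn (Suc n)" for n
    using Qn[of n] unfolding Q_def Cn_def an_def bn_def sqS by simp
  have an_mono: "m \<le> n \<Longrightarrow> an n \<le> an m" for m n
    using an_step by (rule lift_Suc_antimono_le)
  have bn_mono: "m \<le> n \<Longrightarrow> bn m \<le> bn n" for m n
    using bn_step by (rule lift_Suc_mono_le)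
  have an0: "an 0 = a0" and bn0: "bn 0 = b0" using sq0 unfolding an_def bn_def by simp_all
  have ana0: "an n \<le> a0" and b0bn: "b0 \<le> bn n" for n using an_mono[of 0 n] bn_mono[of 0 n] an0 bn0 by simp_all
  have "countable (range an \<union> range bn)" by simp
  moreover have "range an \<union> range bn \<subseteq> S" using anS bnS by auto
  ultimately obtain l u where lu: "l \<in> S" "u \<in> S" "\<forall>t\<in>range an \<union> range bn. l \<le> t \<and> t \<le> u"
    using S_bdd by blast
  have bdd_a: "bdd_below (range an)" using lu(3) by (auto intro: bdd_belowI[of _ l])
  have bdd_b: "bdd_above (range bn)" using lu(3) by (auto intro: bdd_aboveI[of _ u])
  define ainf where "ainf = Inf (range an)"
  define bsup where "bsup = Sup (range bn)"
  have ainf_le: "ainf \<le> an n" for n unfolding ainf_def using bdd_a by (intro cInf_lower) auto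
  have bsup_ge: "bn n \<le> bsup" for n unfolding bsup_def using bdd_b by (intro cSup_upper) auto
  have l_ainf: "l \<le> ainf" unfolding ainf_def using lu(3) by (intro cInf_greatest) auto
  have u_bsup: "bsup \<le> u" unfolding bsup_def using lu(3) by (intro cSup_least) auto
  have ainfS: "ainf \<in> S" using S_conv[OF lu(1) a0S l_ainf] ainf_le[of 0] an0 by simp
  have bsupS: "bsup \<in> S" using S_conv[OF b0(1) lu(2) _ u_bsup] bsup_ge[of 0] bn0 by simp
  have ainf_a0: "ainf \<le> a0" and b0_bsup: "b0 \<le> bsup" using ainf_le[of 0] bsup_ge[of 0] an0 bn0 by simp_all
  define C where "C = (\<Union>n. Cn n)"
  have Cc': "countable C" unfolding C_def using Cc by simp
  have CA: "C \<subseteq> A" unfolding C_def using CnA by auto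
  have CH: "C \<subseteq> H" using CA AH by simp
  have "good_nb p C UNIV" unfolding good_nb_def
  proof (intro allI impI)
    fix P :: "('a set \<times> 'a set) set"
    assume fP: "finite P"
      and Pp: "\<forall>KU\<in>P. compact (fst KU) \<and> fst KU \<subseteq> S \<inter> UNIV \<and> openin (top_of_set S) (snd KU) \<and> p ` fst KU \<subseteq> snd KU"
    have gam: "\<exists>\<gamma>. \<gamma> < bsup \<and> (bsup \<in> fst KU \<longrightarrow> {\<gamma><..bsup} \<inter> S \<subseteq> snd KU)
                 \<and> (bsup \<notin> fst KU \<longrightarrow> (\<forall>y\<in>fst KU. \<not> (\<gamma> < y \<and> y \<le> bsup)))" if KU: "KU \<in> P" for KU
    proof -
      define K where "K = fst KU"
      define U where "U = snd KU"
      have cK: "compact K" and oU: "openin (top_of_set S) U" and pKU: "p ` K \<subseteq> U"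
        using Pp KU unfolding K_def U_def by auto
      obtain V where V: "open V" "U = S \<inter> V" using oU by (auto simp: openin_open)
      show ?thesis
      proof (cases "bsup \<in> K")
        case True
        have "p bsup = bsup" using pfix_hi b0_bsup by simp
        then have "bsup \<in> V" using pKU True V(2) by auto
        moreover have "a0 < bsup" using a0b0 b0_bsup by simp
        ultimately obtain \<gamma> where g: "\<gamma> < bsup" "{\<gamma><..bsup} \<subseteq> V" using open_left[OF V(1)] by blast
        have "{\<gamma><..bsup} \<inter> S \<subseteq> U" using g(2) V(2) by auto
        then show ?thesis using g(1) True unfolding K_def U_def by blast
      next
        case False
        define K' where "K' = K \<inter> {..bsup}"
        have cK': "compact K'" unfolding K'_def using cK by (intro compact_Int_closed) simp_all
        show ?thesis
        proof (cases "K' = {}")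
          case True
          have "\<forall>y\<in>K. \<not> (a0 < y \<and> y \<le> bsup)" using True unfolding K'_def by auto
          then show ?thesis using False a0b0 b0_bsup unfolding K_def U_def by (intro exI[of _ a0]) auto
        next
          case ne: False
          obtain m where m: "m \<in> K'" "\<forall>t\<in>K'. t \<le> m" using compact_attains_sup[OF cK' ne] by blast
          have "m \<le> bsup" "m \<noteq> bsup" using m(1) False unfolding K'_def by auto
          then have "m < bsup" by simp
          moreover have "\<forall>y\<in>K. \<not> (m < y \<and> y \<le> bsup)" using m(2) unfolding K'_def by force
          ultimately show ?thesis using False unfolding K_def U_def by (intro exI[of _ m]) auto
        qed
      qed
    qed
    have del: "\<exists>\<delta>. ainf < \<delta> \<and> (ainf \<in> fst KU \<longrightarrow> {ainf..<\<delta>} \<inter> S \<subseteq> snd KU)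
                 \<and> (ainf \<notin> fst KU \<longrightarrow> (\<forall>y\<in>fst KU. \<not> (ainf \<le> y \<and> y < \<delta>)))" if KU: "KU \<in> P" for KU
    proof -
      define K where "K = fst KU"
      define U where "U = snd KU"
      have cK: "compact K" and oU: "openin (top_of_set S) U" and pKU: "p ` K \<subseteq> U"
        using Pp KU unfolding K_def U_def by auto
      obtain V where V: "open V" "U = S \<inter> V" using oU by (auto simp: openin_open)
      show ?thesis
      proof (cases "ainf \<in> K")
        case True
        have "p ainf = ainf" using pfix_lo ainfS ainf_a0 by simp
        then have "ainf \<in> V" using pKU True V(2) by auto
        moreover have "ainf < b0" using a0b0 ainf_a0 by simp
        ultimately obtain \<delta> where g: "ainf < \<delta>" "{ainf..<\<delta>} \<subseteq> V" using open_right[OF V(1)] by blast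
        have "{ainf..<\<delta>} \<inter> S \<subseteq> U" using g(2) V(2) by auto
        then show ?thesis using g(1) True unfolding K_def U_def by blast
      next
        case False
        define K' where "K' = K \<inter> {ainf..}"
        have cK': "compact K'" unfolding K'_def using cK by (intro compact_Int_closed) simp_all
        show ?thesis
        proof (cases "K' = {}")
          case True
          have "\<forall>y\<in>K. \<not> (ainf \<le> y \<and> y < b0)" using True unfolding K'_def by auto
          then show ?thesis using False a0b0 ainf_a0 unfolding K_def U_def by (intro exI[of _ b0]) auto
        next
          case ne: False
          obtain m where m: "m \<in> K'" "\<forall>t\<in>K'. m \<le> t" using compact_attains_inf[OF cK' ne] by blast
          have "ainf \<le> m" "m \<noteq> ainf" using m(1) False unfolding K'_def by auto
          then have "ainf < m" by simp
          moreover have "\<forall>y\<in>K. \<not> (ainf \<le> y \<and> y < m)" using m(2) unfolding K'_def by force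
          ultimately show ?thesis using False unfolding K_def U_def by (intro exI[of _ m]) auto
        qed
      qed
    qed
    have "\<forall>KU\<in>P. \<exists>\<gamma>. \<gamma> < bsup \<and> (bsup \<in> fst KU \<longrightarrow> {\<gamma><..bsup} \<inter> S \<subseteq> snd KU)
                 \<and> (bsup \<notin> fst KU \<longrightarrow> (\<forall>y\<in>fst KU. \<not> (\<gamma> < y \<and> y \<le> bsup)))"
      by (rule ballI) (rule gam)
    from bchoice[OF this] obtain gf where gf: "\<forall>KU\<in>P. gf KU < bsup \<and> (bsup \<in> fst KU \<longrightarrow> {gf KU<..bsup} \<inter> S \<subseteq> snd KU)
                 \<and> (bsup \<notin> fst KU \<longrightarrow> (\<forall>y\<in>fst KU. \<not> (gf KU < y \<and> y \<le> bsup)))"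
      by (elim exE) (rule that)
    have "\<forall>KU\<in>P. \<exists>\<delta>. ainf < \<delta> \<and> (ainf \<in> fst KU \<longrightarrow> {ainf..<\<delta>} \<inter> S \<subseteq> snd KU)
                 \<and> (ainf \<notin> fst KU \<longrightarrow> (\<forall>y\<in>fst KU. \<not> (ainf \<le> y \<and> y < \<delta>)))"
      by (rule ballI) (rule del)
    from bchoice[OF this] obtain df where df: "\<forall>KU\<in>P. ainf < df KU \<and> (ainf \<in> fst KU \<longrightarrow> {ainf..<df KU} \<inter> S \<subseteq> snd KU)
                 \<and> (ainf \<notin> fst KU \<longrightarrow> (\<forall>y\<in>fst KU. \<not> (ainf \<le> y \<and> y < df KU)))"
      by (elim exE) (rule that)
    define g where "g = Max (insert a0 (gf ` P))"
    define d where "d = Min (insert b0 (df ` P))"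
    have gfg: "gf KU \<le> g" if "KU \<in> P" for KU unfolding g_def using fP that by (intro Max_ge) auto
    have dfd: "d \<le> df KU" if "KU \<in> P" for KU unfolding d_def using fP that by (intro Min_le) auto
    have g_lt: "g < bsup"
    proof -
      have "g \<in> insert a0 (gf ` P)" unfolding g_def using fP by (intro Max_in) auto
      then show ?thesis using gf a0b0 b0_bsup by auto
    qed
    have d_gt: "ainf < d"
    proof -
      have "d \<in> insert b0 (df ` P)" unfolding d_def using fP by (intro Min_in) auto
      then show ?thesis using df a0b0 ainf_a0 by auto
    qed
    obtain n1 where n1: "g < bn n1" using less_cSup_iff[of "range bn" g] bdd_b g_lt unfolding bsup_def by auto
    obtain n2 where n2: "an n2 < d" using cInf_less_iff[of "range an" d] bdd_a d_gt unfolding ainf_def by auto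
    define n where "n = max n1 n2"
    have gb: "g < bn n" using n1 bn_mono[of n1 n] unfolding n_def by simp
    have ad: "an n < d" using n2 an_mono[of n2 n] unfolding n_def by simp
    define P' where "P' = (\<lambda>KU. (fst KU \<inter> {an n..bn n}, snd KU)) ` P \<union> {({bn n}, {g<..} \<inter> S), ({an n}, {..<d} \<inter> S)}"
    have "finite P'" unfolding P'_def using fP by simp
    moreover have "\<forall>KU\<in>P'. compact (fst KU) \<and> fst KU \<subseteq> S \<inter> {an n..bn n} \<and> openin (top_of_set S) (snd KU) \<and> p ` fst KU \<subseteq> snd KU"
    proof
      fix KU assume "KU \<in> P'"
      then consider (a) KU0 where "KU0 \<in> P" "KU = (fst KU0 \<inter> {an n..bn n}, snd KU0)"
        | (b) "KU = ({bn n}, {g<..} \<inter> S)" | (c) "KU = ({an n}, {..<d} \<inter> S)"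
        unfolding P'_def by blast
      then show "compact (fst KU) \<and> fst KU \<subseteq> S \<inter> {an n..bn n} \<and> openin (top_of_set S) (snd KU) \<and> p ` fst KU \<subseteq> snd KU"
      proof cases
        case a
        have "compact (fst KU0)" "fst KU0 \<subseteq> S" "openin (top_of_set S) (snd KU0)" "p ` fst KU0 \<subseteq> snd KU0"
          using Pp a(1) by auto
        moreover have "compact (fst KU0 \<inter> {an n..bn n})" using \<open>compact (fst KU0)\<close> by (intro compact_Int_closed) simp_all
        ultimately show ?thesis using a(2) by auto
      next
        case b
        have "p (bn n) = bn n" using pfix_hi b0bn by simp
        moreover have "openin (top_of_set S) ({g<..} \<inter> S)" by (auto simp: openin_open intro!: exI[of _ "{g<..}"])
        ultimately show ?thesis using b gb bnS anbn by auto
      next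
        case c
        have "p (an n) = an n" using pfix_lo anS ana0 by simp
        moreover have "openin (top_of_set S) ({..<d} \<inter> S)" by (auto simp: openin_open intro!: exI[of _ "{..<d}"])
        ultimately show ?thesis using c ad anS anbn by auto
      qed
    qed
    ultimately obtain f where f: "f \<in> Cn n" "\<forall>KU\<in>P'. f ` fst KU \<subseteq> snd KU"
      using Cg[of n] unfolding good_nb_def by meson
    have fH: "f \<in> H" using f(1) CnA AH by auto
    have fsupp: "\<forall>x. f x \<noteq> x \<longrightarrow> an (Suc n) \<le> x \<and> x \<le> bn (Suc n)" using Csupp f(1) by blast
    have fbn: "g < f (bn n)"
    proof -
      have "({bn n}, {g<..} \<inter> S) \<in> P'" unfolding P'_def by simp
      then show ?thesis using f(2) by fastforce
    qed
    have fan: "f (an n) < d"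
    proof -
      have "({an n}, {..<d} \<inter> S) \<in> P'" unfolding P'_def by simp
      then show ?thesis using f(2) by fastforce
    qed
    have "\<forall>KU\<in>P. f ` fst KU \<subseteq> snd KU"
    proof (intro ballI subsetI)
      fix KU z assume KU: "KU \<in> P" and z: "z \<in> f ` fst KU"
      then obtain y where y: "y \<in> fst KU" "z = f y" by auto
      have KS: "fst KU \<subseteq> S" and pKU: "p ` fst KU \<subseteq> snd KU" using Pp KU by auto
      have yS: "y \<in> S" using KS y(1) by auto
      have py: "p y \<in> snd KU" using pKU y(1) by auto
      have fyS: "f y \<in> S" using H_props(2)[OF fH] yS by auto
      consider (mid) "an n \<le> y \<and> y \<le> bn n" | (hi) "bn n < y" | (lo) "y < an n" by force
      then show "z \<in> snd KU"
      proof cases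
        case mid
        have "(fst KU \<inter> {an n..bn n}, snd KU) \<in> P'" unfolding P'_def using KU by auto
        then have "f ` (fst KU \<inter> {an n..bn n}) \<subseteq> snd KU" using f(2) by fastforce
        then show ?thesis using y mid by auto
      next
        case hi
        show ?thesis
        proof (cases "f y = y")
          case True
          have "p y = y" using pfix_hi b0bn[of n] hi by simp
          then show ?thesis using py True y(2) by simp
        next
          case False
          then have ysup: "an (Suc n) \<le> y" "y \<le> bn (Suc n)" using fsupp by auto
          have "f y \<le> bn (Suc n)" using H_inside[OF fH _ yS ysup] fsupp by blast
          then have fyb: "f y \<le> bsup" using bsup_ge[of "Suc n"] by simp
          have "f (bn n) < f y" using H_mono[OF fH bnS yS hi] .
          then have gfy: "gf KU < f y" using gfg[OF KU] fbn by simp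
          have yb: "y \<le> bsup" using ysup(2) bsup_ge[of "Suc n"] by simp
          have gy: "gf KU < y" using gfg[OF KU] gb hi by simp
          have "bsup \<in> fst KU" using gf KU y(1) yb gy by blast
          then have "{gf KU<..bsup} \<inter> S \<subseteq> snd KU" using gf KU by blast
          moreover have "f y \<in> {gf KU<..bsup} \<inter> S" using gfy fyb fyS by simp
          ultimately show ?thesis using y(2) by blast
        qed
      next
        case lo
        show ?thesis
        proof (cases "f y = y")
          case True
          have "p y = y" using pfix_lo[OF yS] ana0[of n] lo by simp
          then show ?thesis using py True y(2) by simp
        next
          case False
          then have ysup: "an (Suc n) \<le> y" "y \<le> bn (Suc n)" using fsupp by auto
          have "an (Suc n) \<le> f y" using H_inside[OF fH _ yS ysup] fsupp by blast
          then have fya: "ainf \<le> f y" using ainf_le[of "Suc n"] by simp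
          have "f y < f (an n)" using H_mono[OF fH yS anS lo] .
          then have dfy: "f y < df KU" using dfd[OF KU] fan by simp
          have ya: "ainf \<le> y" using ysup(1) ainf_le[of "Suc n"] by simp
          have dy: "y < df KU" using dfd[OF KU] ad lo by simp
          have "ainf \<in> fst KU" using df KU y(1) ya dy by blast
          then have "{ainf..<df KU} \<inter> S \<subseteq> snd KU" using df KU by blast
          moreover have "f y \<in> {ainf..<df KU} \<inter> S" using dfy fya fyS by simp
          ultimately show ?thesis using y(2) by blast
        qed
      qed
    qed
    moreover have "f \<in> C" unfolding C_def using f(1) by blast
    ultimately show "\<exists>f\<in>C. \<forall>KU\<in>P. f ` fst KU \<subseteq> snd KU" by blast
  qed
  then have "p \<in> TT closure_of C" using closure_from_good[OF pH CH] by simp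
  then show "\<exists>C\<subseteq>A. countable C \<and> p \<in> TT closure_of C" using CA Cc' by blast
qed

end

definition conjm :: "('a \<Rightarrow> 'b) \<Rightarrow> ('b \<Rightarrow> 'a) \<Rightarrow> 'b topology \<Rightarrow> ('a \<Rightarrow> 'a) \<Rightarrow> ('b \<Rightarrow> 'b)" where
  "conjm \<phi> \<psi> X h = (\<lambda>y. if y \<in> topspace X then \<phi> (h (\<psi> y)) else y)"

lemma homeo_cpt_props:
  assumes "h \<in> homeo_cpt Y"
  shows "homeomorphic_map Y Y h" "\<And>x. x \<notin> topspace Y \<Longrightarrow> h x = x"
    "compactin Y (Y closure_of {x \<in> topspace Y. h x \<noteq> x})" "\<And>x. x \<in> topspace Y \<Longrightarrow> h x \<in> topspace Y"
  using assms unfolding homeo_cpt_def apply auto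
  using homeomorphic_imp_surjective_map by blast

lemma conjm_in:
  assumes hm: "homeomorphic_maps Y X \<phi> \<psi>" and h: "h \<in> homeo_cpt Y"
  shows "conjm \<phi> \<psi> X h \<in> homeo_cpt X"
proof -
  note hp = homeo_cpt_props[OF h]
  have h\<phi>: "homeomorphic_map Y X \<phi>" and h\<psi>: "homeomorphic_map X Y \<psi>"
    using hm homeomorphic_maps_map by blast+
  have \<psi>\<phi>: "\<And>x. x \<in> topspace Y \<Longrightarrow> \<psi> (\<phi> x) = x" and \<phi>\<psi>: "\<And>y. y \<in> topspace X \<Longrightarrow> \<phi> (\<psi> y) = y"
    using hm by (auto simp: homeomorphic_maps_def)
  have \<phi>in: "\<And>x. x \<in> topspace Y \<Longrightarrow> \<phi> x \<in> topspace X" and \<psi>in: "\<And>y. y \<in> topspace X \<Longrightarrow> \<psi> y \<in> topspace Y"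
    using hm by (auto simp: homeomorphic_maps_def continuous_map_def)
  have "homeomorphic_map Y X (\<phi> \<circ> h)" by (rule homeomorphic_map_compose[OF hp(1) h\<phi>])
  then have c: "homeomorphic_map X X (\<phi> \<circ> h \<circ> \<psi>)" by (rule homeomorphic_map_compose[OF h\<psi>])
  have hm1: "homeomorphic_map X X (conjm \<phi> \<psi> X h)"
    by (rule homeomorphic_map_eq[OF c]) (simp add: conjm_def)
  have out: "\<And>x. x \<notin> topspace X \<Longrightarrow> conjm \<phi> \<psi> X h x = x" by (simp add: conjm_def)
  have supp: "{x \<in> topspace X. conjm \<phi> \<psi> X h x \<noteq> x} = \<phi> ` {x \<in> topspace Y. h x \<noteq> x}"
  proof (intro equalityI subsetI)
    fix y assume "y \<in> {x \<in> topspace X. conjm \<phi> \<psi> X h x \<noteq> x}"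
    then have y: "y \<in> topspace X" "\<phi> (h (\<psi> y)) \<noteq> y" by (auto simp: conjm_def)
    have "h (\<psi> y) \<noteq> \<psi> y" using y \<phi>\<psi> by auto
    moreover have "\<psi> y \<in> topspace Y" using \<psi>in y(1) .
    ultimately have "\<psi> y \<in> {x \<in> topspace Y. h x \<noteq> x}" by simp
    then show "y \<in> \<phi> ` {x \<in> topspace Y. h x \<noteq> x}" using \<phi>\<psi>[OF y(1)] by (metis image_eqI)
  next
    fix y assume "y \<in> \<phi> ` {x \<in> topspace Y. h x \<noteq> x}"
    then obtain x where x: "x \<in> topspace Y" "h x \<noteq> x" "y = \<phi> x" by auto
    have "y \<in> topspace X" using \<phi>in x by simp
    moreover have "\<phi> (h x) \<noteq> \<phi> x"
    proof
      assume "\<phi> (h x) = \<phi> x"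
      then have "\<psi> (\<phi> (h x)) = \<psi> (\<phi> x)" by simp
      then show False using \<psi>\<phi>[OF x(1)] \<psi>\<phi>[OF hp(4)[OF x(1)]] x(2) by simp
    qed
    ultimately show "y \<in> {x \<in> topspace X. conjm \<phi> \<psi> X h x \<noteq> x}" using x \<psi>\<phi> by (simp add: conjm_def)
  qed
  have sub: "{x \<in> topspace Y. h x \<noteq> x} \<subseteq> topspace Y" by auto
  have "X closure_of {x \<in> topspace X. conjm \<phi> \<psi> X h x \<noteq> x} = \<phi> ` (Y closure_of {x \<in> topspace Y. h x \<noteq> x})"
    unfolding supp by (rule homeomorphic_map_closure_of[OF h\<phi> sub])
  moreover have "compactin X (\<phi> ` (Y closure_of {x \<in> topspace Y. h x \<noteq> x}))"
    using homeomorphic_map_compactness[OF h\<phi> closure_of_subset_topspace] hp(3) by blast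
  ultimately have "compactin X (X closure_of {x \<in> topspace X. conjm \<phi> \<psi> X h x \<noteq> x})" by simp
  then show ?thesis unfolding homeo_cpt_def using hm1 out by blast
qed

lemma conjm_inv:
  assumes hm: "homeomorphic_maps Y X \<phi> \<psi>" and h: "h \<in> homeo_cpt Y"
  shows "conjm \<psi> \<phi> Y (conjm \<phi> \<psi> X h) = h"
proof
  fix x
  note hp = homeo_cpt_props[OF h]
  have \<psi>\<phi>: "\<And>x. x \<in> topspace Y \<Longrightarrow> \<psi> (\<phi> x) = x"
    using hm by (auto simp: homeomorphic_maps_def)
  have \<phi>in: "\<And>x. x \<in> topspace Y \<Longrightarrow> \<phi> x \<in> topspace X"
    using hm by (auto simp: homeomorphic_maps_def continuous_map_def)
  show "conjm \<psi> \<phi> Y (conjm \<phi> \<psi> X h) x = h x"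
  proof (cases "x \<in> topspace Y")
    case True
    then show ?thesis using \<phi>in \<psi>\<phi> hp(4) by (simp add: conjm_def)
  next
    case False
    then show ?thesis using hp(2) by (simp add: conjm_def)
  qed
qed

lemma conjm_image:
  assumes hm: "homeomorphic_maps Y X \<phi> \<psi>" and h: "h \<in> homeo_cpt Y" and K: "K \<subseteq> topspace Y" and U: "U \<subseteq> topspace Y"
  shows "conjm \<phi> \<psi> X h ` (\<phi> ` K) \<subseteq> \<phi> ` U \<longleftrightarrow> h ` K \<subseteq> U"
proof -
  note hp = homeo_cpt_props[OF h]
  have \<psi>\<phi>: "\<And>x. x \<in> topspace Y \<Longrightarrow> \<psi> (\<phi> x) = x"
    using hm by (auto simp: homeomorphic_maps_def)
  have \<phi>in: "\<And>x. x \<in> topspace Y \<Longrightarrow> \<phi> x \<in> topspace X"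
    using hm by (auto simp: homeomorphic_maps_def continuous_map_def)
  have e: "conjm \<phi> \<psi> X h ` (\<phi> ` K) = \<phi> ` (h ` K)"
  proof -
    have "\<And>k. k \<in> K \<Longrightarrow> conjm \<phi> \<psi> X h (\<phi> k) = \<phi> (h k)"
      using K \<phi>in \<psi>\<phi> by (auto simp: conjm_def)
    then show ?thesis by (simp add: image_image cong: image_cong)
  qed
  have inj: "inj_on \<phi> (topspace Y)" using \<psi>\<phi> by (rule inj_on_inverseI)
  have hK: "h ` K \<subseteq> topspace Y" using hp(4) K by auto
  show ?thesis unfolding e using inj_on_image_subset_iff[OF inj hK U] .
qed

lemma ct_transfer:
  assumes hmap: "homeomorphic_map Y X \<phi>"
    and ct: "countably_tight (compact_open_on (homeo_cpt Y) Y)"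
  shows "countably_tight (compact_open_on (homeo_cpt X) X)"
proof -
  obtain \<psi> where hm: "homeomorphic_maps Y X \<phi> \<psi>" using hmap homeomorphic_map_maps by blast
  have hm': "homeomorphic_maps X Y \<psi> \<phi>" using hm homeomorphic_maps_sym by blast
  have h\<phi>: "homeomorphic_map Y X \<phi>" and h\<psi>: "homeomorphic_map X Y \<psi>"
    using hm homeomorphic_maps_map by blast+
  have \<psi>\<phi>: "\<And>x. x \<in> topspace Y \<Longrightarrow> \<psi> (\<phi> x) = x" and \<phi>\<psi>: "\<And>y. y \<in> topspace X \<Longrightarrow> \<phi> (\<psi> y) = y"
    using hm by (auto simp: homeomorphic_maps_def)
  have \<phi>in: "\<And>x. x \<in> topspace Y \<Longrightarrow> \<phi> x \<in> topspace X" and \<psi>in: "\<And>y. y \<in> topspace X \<Longrightarrow> \<psi> y \<in> topspace Y"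
    using hm by (auto simp: homeomorphic_maps_def continuous_map_def)
  define \<Phi> where "\<Phi> = conjm \<phi> \<psi> X"
  define \<Psi> where "\<Psi> = conjm \<psi> \<phi> Y"
  define HY where "HY = homeo_cpt Y"
  define HX where "HX = homeo_cpt X"
  have \<Phi>in: "\<And>h. h \<in> HY \<Longrightarrow> \<Phi> h \<in> HX" unfolding \<Phi>_def HY_def HX_def using conjm_in[OF hm] by blast
  have \<Psi>in: "\<And>g. g \<in> HX \<Longrightarrow> \<Psi> g \<in> HY" unfolding \<Psi>_def HY_def HX_def using conjm_in[OF hm'] by blast
  have \<Psi>\<Phi>: "\<And>h. h \<in> HY \<Longrightarrow> \<Psi> (\<Phi> h) = h" unfolding \<Phi>_def \<Psi>_def HY_def using conjm_inv[OF hm] by blast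
  have \<Phi>\<Psi>: "\<And>g. g \<in> HX \<Longrightarrow> \<Phi> (\<Psi> g) = g" unfolding \<Phi>_def \<Psi>_def HX_def using conjm_inv[OF hm'] by blast
  have img: "\<Phi> ` {h \<in> HY. h ` K \<subseteq> U} = {g \<in> HX. g ` (\<phi> ` K) \<subseteq> \<phi> ` U}"
    if K: "K \<subseteq> topspace Y" and U: "U \<subseteq> topspace Y" for K U
  proof (intro equalityI subsetI)
    fix g assume "g \<in> \<Phi> ` {h \<in> HY. h ` K \<subseteq> U}"
    then obtain h where h: "h \<in> HY" "h ` K \<subseteq> U" "g = \<Phi> h" by auto
    have "\<Phi> h ` (\<phi> ` K) \<subseteq> \<phi> ` U" using conjm_image[OF hm _ K U] h(1,2) unfolding \<Phi>_def HY_def by blast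
    then show "g \<in> {g \<in> HX. g ` (\<phi> ` K) \<subseteq> \<phi> ` U}" using h \<Phi>in by simp
  next
    fix g assume g: "g \<in> {g \<in> HX. g ` (\<phi> ` K) \<subseteq> \<phi> ` U}"
    then have gX: "g \<in> HX" and gi: "g ` (\<phi> ` K) \<subseteq> \<phi> ` U" by auto
    have hY: "\<Psi> g \<in> HY" using \<Psi>in[OF gX] .
    have "\<Phi> (\<Psi> g) ` (\<phi> ` K) \<subseteq> \<phi> ` U" using gi \<Phi>\<Psi>[OF gX] by simp
    then have "\<Psi> g ` K \<subseteq> U" using conjm_image[OF hm _ K U] hY unfolding \<Phi>_def HY_def by blast
    then have "\<Psi> g \<in> {h \<in> HY. h ` K \<subseteq> U}" using hY by simp
    then show "g \<in> \<Phi> ` {h \<in> HY. h ` K \<subseteq> U}" using \<Phi>\<Psi>[OF gX] by (metis image_eqI)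
  qed
  define BY where "BY = insert HY {{h \<in> HY. h ` K \<subseteq> U} | K U. compactin Y K \<and> openin Y U}"
  define BX where "BX = insert HX {{g \<in> HX. g ` K \<subseteq> U} | K U. compactin X K \<and> openin X U}"
  have UBY: "\<Union>BY = HY" unfolding BY_def by auto
  have injP: "inj_on \<Phi> (\<Union>BY)" unfolding UBY
  proof (rule inj_onI)
    fix x y assume "x \<in> HY" "y \<in> HY" "\<Phi> x = \<Phi> y"
    then have "\<Psi> (\<Phi> x) = \<Psi> (\<Phi> y)" by simp
    then show "x = y" using \<Psi>\<Phi> \<open>x \<in> HY\<close> \<open>y \<in> HY\<close> by simp
  qed
  have HXeq: "\<Phi> ` HY = HX"
  proof (intro equalityI subsetI)
    fix g assume "g \<in> \<Phi> ` HY" then show "g \<in> HX" using \<Phi>in by auto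
  next
    fix g assume "g \<in> HX" then show "g \<in> \<Phi> ` HY" using \<Phi>\<Psi> \<Psi>in by (metis image_eqI)
  qed
  have BXeq: "BX = (image \<Phi>) ` BY"
  proof (intro equalityI subsetI)
    fix Z assume "Z \<in> BX"
    then consider "Z = HX" | K U where "Z = {g \<in> HX. g ` K \<subseteq> U}" "compactin X K" "openin X U"
      unfolding BX_def by blast
    then show "Z \<in> (image \<Phi>) ` BY"
    proof cases
      case 1 then show ?thesis unfolding BY_def using HXeq by auto
    next
      case 2
      have KX: "K \<subseteq> topspace X" and UX: "U \<subseteq> topspace X"
        using 2 compactin_subset_topspace openin_subset by blast+
      have K': "\<phi> ` (\<psi> ` K) = K" using KX \<phi>\<psi> by (force simp: image_image)
      have U': "\<phi> ` (\<psi> ` U) = U" using UX \<phi>\<psi> by (force simp: image_image)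
      have cK: "compactin Y (\<psi> ` K)" using homeomorphic_map_compactness[OF h\<psi> KX] 2(2) by simp
      have oU: "openin Y (\<psi> ` U)" using homeomorphic_map_openness[OF h\<psi> UX] 2(3) by simp
      have sK: "\<psi> ` K \<subseteq> topspace Y" and sU: "\<psi> ` U \<subseteq> topspace Y" using KX UX \<psi>in by auto
      have "Z = \<Phi> ` {h \<in> HY. h ` (\<psi> ` K) \<subseteq> \<psi> ` U}" using img[OF sK sU] K' U' 2(1) by simp
      moreover have "{h \<in> HY. h ` (\<psi> ` K) \<subseteq> \<psi> ` U} \<in> BY" unfolding BY_def using cK oU by blast
      ultimately show ?thesis by blast
    qed
  next
    fix Z assume "Z \<in> (image \<Phi>) ` BY"
    then obtain Z0 where Z0: "Z0 \<in> BY" "Z = \<Phi> ` Z0" by auto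
    then consider "Z0 = HY" | K U where "Z0 = {h \<in> HY. h ` K \<subseteq> U}" "compactin Y K" "openin Y U"
      unfolding BY_def by blast
    then show "Z \<in> BX"
    proof cases
      case 1 then show ?thesis unfolding BX_def using HXeq Z0(2) by auto
    next
      case 2
      have KY: "K \<subseteq> topspace Y" and UY: "U \<subseteq> topspace Y"
        using 2 compactin_subset_topspace openin_subset by blast+
      have cK: "compactin X (\<phi> ` K)" using homeomorphic_map_compactness[OF h\<phi> KY] 2(2) by simp
      have oU: "openin X (\<phi> ` U)" using homeomorphic_map_openness[OF h\<phi> UY] 2(3) by simp
      have "Z = {g \<in> HX. g ` (\<phi> ` K) \<subseteq> \<phi> ` U}" using img[OF KY UY] Z0(2) 2(1) by simp
      then show ?thesis unfolding BX_def using cK oU by blast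
    qed
  qed
  have "homeomorphic_map (topology_generated_by BY) (topology_generated_by BX) \<Phi>"
    by (rule homeo_generated[OF injP BXeq])
  then have "homeomorphic_map (compact_open_on (homeo_cpt Y) Y) (compact_open_on (homeo_cpt X) X) \<Phi>"
    unfolding compact_open_on_def BY_def BX_def HY_def HX_def .
  then show ?thesis using ct by (rule ct_homeo)
qed

definition lex_le :: "('w::wellorder \<times> real) \<Rightarrow> ('w \<times> real) \<Rightarrow> bool" where
  "lex_le p q \<longleftrightarrow> p = q \<or> lex_less p q"

lemma lex_le_iff: "lex_le p q \<longleftrightarrow> fst p < fst q \<or> (fst p = fst q \<and> snd p \<le> snd q)"
  unfolding lex_le_def lex_less_def by (cases p; cases q) auto

lemma lex_less_trans: "lex_less p q \<Longrightarrow> lex_less q r \<Longrightarrow> lex_less p r"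
  unfolding lex_less_def by (auto intro: less_trans)

lemma lex_less_irrefl: "\<not> lex_less p p"
  unfolding lex_less_def by auto

lemma lex_less_total: "p \<noteq> q \<Longrightarrow> lex_less p q \<or> lex_less q p"
  unfolding lex_less_def by (cases p; cases q) (auto simp: neq_iff)

lemma lex_less_asym: "lex_less p q \<Longrightarrow> \<not> lex_less q p"
  unfolding lex_less_def by auto

lemma lex_not_less: "\<not> lex_less p q \<longleftrightarrow> lex_le q p"
  using lex_less_total lex_less_asym unfolding lex_le_def by (metis lex_less_irrefl)

lemma LR_inf:
  assumes ne: "X \<noteq> {}" and XR: "X \<subseteq> long_ray_carrier"
  shows "\<exists>g\<in>long_ray_carrier. (\<forall>x\<in>X. lex_le g x) \<and> (\<forall>z. (\<forall>x\<in>X. lex_le z x) \<longrightarrow> lex_le z g)"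
proof -
  have ex: "\<exists>w r. (w, r) \<in> X" using ne by auto
  define w0 where "w0 = (LEAST w. \<exists>r. (w, r) \<in> X)"
  have w0X: "\<exists>r. (w0, r) \<in> X" unfolding w0_def using ex by (rule LeastI_ex)
  have w0le: "w0 \<le> w" if "(w, r) \<in> X" for w r unfolding w0_def using that by (intro Least_le) blast
  define Rs where "Rs = {r. (w0, r) \<in> X}"
  have Rsne: "Rs \<noteq> {}" using w0X unfolding Rs_def by auto
  have Rs01: "0 \<le> r \<and> r < 1" if "r \<in> Rs" for r using that XR unfolding Rs_def long_ray_carrier_def by auto
  have bddR: "bdd_below Rs" using Rs01 by (auto intro: bdd_belowI[of _ 0])
  define r0 where "r0 = Inf Rs"
  have r0ge: "0 \<le> r0" unfolding r0_def using Rsne Rs01 by (intro cInf_greatest) auto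
  obtain r1 where r1: "r1 \<in> Rs" using Rsne by auto
  have "r0 \<le> r1" unfolding r0_def using r1 bddR by (rule cInf_lower)
  then have r0lt: "r0 < 1" using Rs01[OF r1] by simp
  have gR: "(w0, r0) \<in> long_ray_carrier" using r0ge r0lt unfolding long_ray_carrier_def by simp
  have lb: "\<forall>x\<in>X. lex_le (w0, r0) x"
  proof
    fix x assume x: "x \<in> X"
    obtain w r where wr: "x = (w, r)" by (cases x)
    have "w0 \<le> w" using w0le x wr by simp
    moreover have "w = w0 \<Longrightarrow> r0 \<le> r" unfolding r0_def using x wr bddR by (intro cInf_lower) (auto simp: Rs_def)
    ultimately show "lex_le (w0, r0) x" unfolding lex_le_iff wr by (auto simp: le_less)
  qed
  have gr: "\<forall>z. (\<forall>x\<in>X. lex_le z x) \<longrightarrow> lex_le z (w0, r0)"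
  proof (intro allI impI)
    fix z assume z: "\<forall>x\<in>X. lex_le z x"
    have zr: "\<And>r. r \<in> Rs \<Longrightarrow> fst z < w0 \<or> (fst z = w0 \<and> snd z \<le> r)"
      using z unfolding Rs_def lex_le_iff by fastforce
    show "lex_le z (w0, r0)"
    proof (cases "fst z < w0")
      case True then show ?thesis unfolding lex_le_iff by simp
    next
      case False
      then have "fst z = w0" "\<And>r. r \<in> Rs \<Longrightarrow> snd z \<le> r" using zr r1 by auto
      moreover have "snd z \<le> r0" unfolding r0_def using Rsne \<open>\<And>r. r \<in> Rs \<Longrightarrow> snd z \<le> r\<close> by (rule cInf_greatest)
      ultimately show ?thesis unfolding lex_le_iff by simp
    qed
  qed
  show ?thesis using gR lb gr by blast
qed

lemma LR_sup:
  assumes ne: "X \<noteq> {}" and XR: "X \<subseteq> long_ray_carrier" and uR: "u \<in> long_ray_carrier"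
    and ub: "\<forall>x\<in>X. lex_le x u"
  shows "\<exists>s\<in>long_ray_carrier. (\<forall>x\<in>X. lex_le x s) \<and> (\<forall>z\<in>long_ray_carrier. (\<forall>x\<in>X. lex_le x z) \<longrightarrow> lex_le s z)"
proof -
  have fub: "\<forall>x\<in>X. fst x \<le> fst u" using ub unfolding lex_le_iff by auto
  define w0 where "w0 = (LEAST w. \<forall>x\<in>X. fst x \<le> w)"
  have w0ub: "\<forall>x\<in>X. fst x \<le> w0" unfolding w0_def using fub by (rule LeastI)
  have w0min: "w0 \<le> w" if "\<forall>x\<in>X. fst x \<le> w" for w unfolding w0_def using that by (rule Least_le)
  have zfst: "w0 \<le> fst z" if "\<forall>x\<in>X. lex_le x z" for z
  proof (rule w0min, intro ballI)
    fix x assume "x \<in> X" then show "fst x \<le> fst z" using that unfolding lex_le_iff by auto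
  qed
  show ?thesis
  proof (cases "\<exists>r. (w0, r) \<in> X")
    case True
    define Rs where "Rs = {r. (w0, r) \<in> X}"
    have Rsne: "Rs \<noteq> {}" using True unfolding Rs_def by auto
    have Rs01: "0 \<le> r \<and> r < 1" if "r \<in> Rs" for r using that XR unfolding Rs_def long_ray_carrier_def by auto
    have bddR: "bdd_above Rs"
    proof (rule bdd_aboveI[where M=1])
      fix r assume "r \<in> Rs" then show "r \<le> 1" using Rs01 by (simp add: less_imp_le)
    qed
    define r0 where "r0 = Sup Rs"
    obtain r1 where r1: "r1 \<in> Rs" using Rsne by auto
    have r0ge: "0 \<le> r0" using cSup_upper[OF r1 bddR] Rs01[OF r1] unfolding r0_def by simp
    have r0le: "r0 \<le> 1" unfolding r0_def using Rsne Rs01 by (intro cSup_least) (auto simp: less_imp_le)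
    have zsnd: "r0 \<le> snd z" if "\<forall>x\<in>X. lex_le x z" "fst z = w0" for z
      unfolding r0_def
    proof (rule cSup_least[OF Rsne])
      fix r assume "r \<in> Rs"
      then have "(w0, r) \<in> X" unfolding Rs_def by simp
      then show "r \<le> snd z" using that unfolding lex_le_iff by fastforce
    qed
    show ?thesis
    proof (cases "r0 < 1")
      case True
      have sR: "(w0, r0) \<in> long_ray_carrier" using r0ge True unfolding long_ray_carrier_def by simp
      have up: "\<forall>x\<in>X. lex_le x (w0, r0)"
      proof
        fix x assume x: "x \<in> X"
        have "fst x \<le> w0" using w0ub x by simp
        moreover have "snd x \<le> r0" if "fst x = w0"
        proof -
          have "(w0, snd x) \<in> X" using x that by (metis prod.collapse)
          then have "snd x \<in> Rs" unfolding Rs_def by simp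
          then show ?thesis unfolding r0_def using bddR by (rule cSup_upper)
        qed
        ultimately show "lex_le x (w0, r0)" unfolding lex_le_iff by (auto simp: le_less)
      qed
      have le: "\<forall>z\<in>long_ray_carrier. (\<forall>x\<in>X. lex_le x z) \<longrightarrow> lex_le (w0, r0) z"
      proof (intro ballI impI)
        fix z assume "z \<in> long_ray_carrier" and z: "\<forall>x\<in>X. lex_le x z"
        have "w0 \<le> fst z" using zfst z by simp
        moreover have "fst z = w0 \<Longrightarrow> r0 \<le> snd z" using zsnd z by simp
        ultimately show "lex_le (w0, r0) z" unfolding lex_le_iff by (auto simp: le_less)
      qed
      show ?thesis using sR up le by blast
    next
      case False
      then have r01: "r0 = 1" using r0le by simp
      have "fst u \<noteq> w0"
      proof
        assume "fst u = w0"
        then have "r0 \<le> snd u" using zsnd ub by simp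
        then show False using uR r01 unfolding long_ray_carrier_def by auto
      qed
      then have w0u: "w0 < fst u" using zfst ub le_less by blast
      define w1 where "w1 = (LEAST w. w0 < w)"
      have w1gt: "w0 < w1" unfolding w1_def using w0u by (rule LeastI)
      have w1min: "w1 \<le> w" if "w0 < w" for w unfolding w1_def using that by (rule Least_le)
      have sR: "(w1, 0) \<in> long_ray_carrier" unfolding long_ray_carrier_def by simp
      have up: "\<forall>x\<in>X. lex_le x (w1, 0)"
      proof
        fix x assume x: "x \<in> X"
        have "fst x \<le> w0" using w0ub x by simp
        then have "fst x < w1" using w1gt by simp
        then show "lex_le x (w1, 0)" unfolding lex_le_iff by simp
      qed
      have le: "\<forall>z\<in>long_ray_carrier. (\<forall>x\<in>X. lex_le x z) \<longrightarrow> lex_le (w1, 0) z"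
      proof (intro ballI impI)
        fix z assume zR: "z \<in> long_ray_carrier" and z: "\<forall>x\<in>X. lex_le x z"
        have "w0 \<le> fst z" using zfst z by simp
        moreover have "fst z \<noteq> w0"
        proof
          assume "fst z = w0"
          then have "r0 \<le> snd z" using zsnd z by simp
          then show False using zR r01 unfolding long_ray_carrier_def by auto
        qed
        ultimately have "w0 < fst z" by simp
        then have "w1 \<le> fst z" by (rule w1min)
        moreover have "0 \<le> snd z" using zR unfolding long_ray_carrier_def by auto
        ultimately show "lex_le (w1, 0) z" unfolding lex_le_iff by (auto simp: le_less)
      qed
      show ?thesis using sR up le by blast
    qed
  next
    case False
    have sR: "(w0, 0) \<in> long_ray_carrier" unfolding long_ray_carrier_def by simp
    have up: "\<forall>x\<in>X. lex_le x (w0, 0)"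
    proof
      fix x assume x: "x \<in> X"
      have "fst x \<le> w0" using w0ub x by simp
      moreover have "fst x \<noteq> w0" using False x by (metis prod.collapse)
      ultimately show "lex_le x (w0, 0)" unfolding lex_le_iff by simp
    qed
    have le: "\<forall>z\<in>long_ray_carrier. (\<forall>x\<in>X. lex_le x z) \<longrightarrow> lex_le (w0, 0) z"
    proof (intro ballI impI)
      fix z assume zR: "z \<in> long_ray_carrier" and z: "\<forall>x\<in>X. lex_le x z"
      have "w0 \<le> fst z" using zfst z by simp
      moreover have "0 \<le> snd z" using zR unfolding long_ray_carrier_def by auto
      ultimately show "lex_le (w0, 0) z" unfolding lex_le_iff by (auto simp: le_less)
    qed
    show ?thesis using sR up le by blast
  qed
qed

definition wbot :: "'w::wellorder" where "wbot = (LEAST w. True)"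

lemma wbot_le: "wbot \<le> (w::'w::wellorder)"
  unfolding wbot_def by (rule Least_le) simp

lemma carrier_iff: "(b, w, r) \<in> long_line_carrier \<longleftrightarrow> 0 \<le> r \<and> r < 1 \<and> \<not> (b = False \<and> w = wbot \<and> r = 0)"
  unfolding long_line_carrier_def long_ray_carrier_def wbot_def by auto

lemma lll_iff: "long_line_less (b, p) (c, q) = (if b then c \<and> lex_less p q else c \<or> lex_less q p)"
  unfolding long_line_less_def by (cases b; cases c) auto

definition ll_le :: "(bool \<times> 'w::wellorder \<times> real) \<Rightarrow> (bool \<times> 'w \<times> real) \<Rightarrow> bool" where
  "ll_le x y \<longleftrightarrow> x = y \<or> long_line_less x y"

lemma ll_le_iff: "ll_le (b, p) (c, q) = (if b then c \<and> lex_le p q else c \<or> lex_le q p)"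
  unfolding ll_le_def lll_iff lex_le_def by (cases b; cases c) auto

lemma lll_irrefl: "\<not> long_line_less x x"
  by (cases x) (simp add: lll_iff lex_less_irrefl)

lemma lll_trans: "long_line_less x y \<Longrightarrow> long_line_less y z \<Longrightarrow> long_line_less x z"
  by (cases x; cases y; cases z) (auto simp: lll_iff split: if_splits intro: lex_less_trans)

lemma lll_total: "x \<noteq> y \<Longrightarrow> long_line_less x y \<or> long_line_less y x"
proof -
  assume ne: "x \<noteq> y"
  obtain b p where x: "x = (b, p)" by (metis surj_pair)
  obtain c q where y: "y = (c, q)" by (metis surj_pair)
  show ?thesis
  proof (cases "b = c")
    case True
    then have "p \<noteq> q" using ne x y by auto
    then have "lex_less p q \<or> lex_less q p" by (rule lex_less_total)
    then show ?thesis using x y True by (cases c) (auto simp: lll_iff)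
  next
    case False
    then show ?thesis using x y by (cases b; cases c) (auto simp: lll_iff)
  qed
qed

typedef (overloaded) ('w::wellorder) ll = "long_line_carrier :: (bool \<times> 'w \<times> real) set"
  morphisms Rep_ll Abs_ll
  by (intro exI[of _ "(True, wbot, 0)"]) (simp add: carrier_iff)

instantiation ll :: (wellorder) linorder
begin
definition less_ll :: "'a ll \<Rightarrow> 'a ll \<Rightarrow> bool" where
  "less_ll x y \<longleftrightarrow> long_line_less (Rep_ll x) (Rep_ll y)"
definition less_eq_ll :: "'a ll \<Rightarrow> 'a ll \<Rightarrow> bool" where
  "less_eq_ll x y \<longleftrightarrow> x = y \<or> long_line_less (Rep_ll x) (Rep_ll y)"
instance
proof
  fix x y z :: "'a ll"
  show "(x < y) = (x \<le> y \<and> \<not> y \<le> x)"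
    unfolding less_ll_def less_eq_ll_def using lll_irrefl lll_trans by blast
  show "x \<le> x" unfolding less_eq_ll_def by simp
  show "x \<le> y \<Longrightarrow> y \<le> z \<Longrightarrow> x \<le> z" unfolding less_eq_ll_def using lll_trans by blast
  show "x \<le> y \<Longrightarrow> y \<le> x \<Longrightarrow> x = y" unfolding less_eq_ll_def using lll_irrefl lll_trans by blast
  show "x \<le> y \<or> y \<le> x" unfolding less_eq_ll_def using lll_total Rep_ll_inject by blast
qed
end

lemma le_ll_Rep: "x \<le> y \<longleftrightarrow> ll_le (Rep_ll x) (Rep_ll y)"
  unfolding less_eq_ll_def ll_le_def using Rep_ll_inject by blast

instantiation ll :: (wellorder) distrib_lattice
begin
definition "(inf :: 'a ll \<Rightarrow> 'a ll \<Rightarrow> 'a ll) = min"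
definition "(sup :: 'a ll \<Rightarrow> 'a ll \<Rightarrow> 'a ll) = max"
instance
  by standard (auto simp add: inf_ll_def sup_ll_def max_min_distrib2)
end

lemma Rep_ll_carrier: "Rep_ll x \<in> long_line_carrier"
  by (rule Rep_ll)

lemma Rep_ll_cases:
  obtains b w r where "Rep_ll x = (b, w, r)" "0 \<le> r" "r < 1" "\<not> (b = False \<and> w = wbot \<and> r = 0)"
proof -
  obtain b w r where e: "Rep_ll x = (b, w, r)" by (metis prod_cases3)
  moreover have "(b, w, r) \<in> long_line_carrier" using Rep_ll_carrier[of x] e by simp
  ultimately show ?thesis using that by (simp add: carrier_iff)
qed

lemma ll_lub:
  fixes X :: "'w::wellorder ll set"
  assumes ne: "X \<noteq> {}" and bdd: "\<exists>u. \<forall>x\<in>X. x \<le> u"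
  shows "\<exists>s. (\<forall>x\<in>X. x \<le> s) \<and> (\<forall>z. (\<forall>x\<in>X. x \<le> z) \<longrightarrow> s \<le> z)"
proof -
  obtain u where u: "\<forall>x\<in>X. x \<le> u" using bdd by blast
  have Rsnd: "snd (Rep_ll x) \<in> long_ray_carrier" for x :: "'w ll"
  proof -
    obtain b p where e: "Rep_ll x = (b, p)" by (metis surj_pair)
    have "(b, p) \<in> long_line_carrier" using Rep_ll_carrier[of x] e by simp
    then show ?thesis using e by (simp add: long_line_carrier_def)
  qed
  show ?thesis
  proof (cases "\<exists>x\<in>X. fst (Rep_ll x) = True")
    case True
    define XT where "XT = {p. \<exists>x\<in>X. Rep_ll x = (True, p)}"
    obtain x0 where x0: "x0 \<in> X" "fst (Rep_ll x0) = True" using True by blast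
    have XTne: "XT \<noteq> {}" unfolding XT_def using x0 by (intro notI) (cases "Rep_ll x0", auto)
    have XTR: "XT \<subseteq> long_ray_carrier"
    proof
      fix p assume "p \<in> XT"
      then obtain x where "Rep_ll x = (True, p)" unfolding XT_def by blast
      then show "p \<in> long_ray_carrier" using Rsnd[of x] by simp
    qed
    have "ll_le (Rep_ll x0) (Rep_ll u)" using u x0 le_ll_Rep by blast
    then have uT: "fst (Rep_ll u) = True" using x0(2)
      by (cases "Rep_ll x0"; cases "Rep_ll u") (auto simp: ll_le_iff split: if_splits)
    have ubT: "\<forall>p\<in>XT. lex_le p (snd (Rep_ll u))"
    proof
      fix p assume "p \<in> XT"
      then obtain x where "x \<in> X" "Rep_ll x = (True, p)" unfolding XT_def by blast
      then have "ll_le (True, p) (Rep_ll u)" using u le_ll_Rep by metis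
      then show "lex_le p (snd (Rep_ll u))" using uT by (cases "Rep_ll u") (auto simp: ll_le_iff)
    qed
    obtain s where s: "s \<in> long_ray_carrier" "\<forall>x\<in>XT. lex_le x s"
      "\<forall>z\<in>long_ray_carrier. (\<forall>x\<in>XT. lex_le x z) \<longrightarrow> lex_le s z"
      using LR_sup[OF XTne XTR Rsnd ubT] by blast
    have sC: "(True, s) \<in> long_line_carrier" using s(1) by (cases s) (auto simp: carrier_iff long_ray_carrier_def)
    define S0 where "S0 = Abs_ll (True, s)"
    have RS0: "Rep_ll S0 = (True, s)" unfolding S0_def by (rule Abs_ll_inverse[OF sC])
    have up: "\<forall>x\<in>X. x \<le> S0"
    proof
      fix x assume x: "x \<in> X"
      show "x \<le> S0"
      proof (cases "fst (Rep_ll x)")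
        case True
        then obtain p where p: "Rep_ll x = (True, p)" by (cases "Rep_ll x") auto
        then have "p \<in> XT" unfolding XT_def using x by blast
        then have "lex_le p s" using s(2) by blast
        then show ?thesis unfolding le_ll_Rep RS0 p by (simp add: ll_le_iff)
      next
        case False
        then obtain p where p: "Rep_ll x = (False, p)" by (cases "Rep_ll x") auto
        then show ?thesis unfolding le_ll_Rep RS0 p by (simp add: ll_le_iff)
      qed
    qed
    have least: "\<forall>z. (\<forall>x\<in>X. x \<le> z) \<longrightarrow> S0 \<le> z"
    proof (intro allI impI)
      fix z assume z: "\<forall>x\<in>X. x \<le> z"
      have "ll_le (Rep_ll x0) (Rep_ll z)" using z x0 le_ll_Rep by blast
      then have zT: "fst (Rep_ll z) = True" using x0(2)
        by (cases "Rep_ll x0"; cases "Rep_ll z") (auto simp: ll_le_iff split: if_splits)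
      then obtain t where t: "Rep_ll z = (True, t)" by (cases "Rep_ll z") auto
      have tR: "t \<in> long_ray_carrier" using Rsnd[of z] t by simp
      have "\<forall>p\<in>XT. lex_le p t"
      proof
        fix p assume "p \<in> XT"
        then obtain x where "x \<in> X" "Rep_ll x = (True, p)" unfolding XT_def by blast
        then have "ll_le (True, p) (Rep_ll z)" using z le_ll_Rep by metis
        then show "lex_le p t" using t by (simp add: ll_le_iff)
      qed
      then have "lex_le s t" using s(3) tR by blast
      then show "S0 \<le> z" unfolding le_ll_Rep RS0 t by (simp add: ll_le_iff)
    qed
    show ?thesis using up least by blast
  next
    case False
    then have allF: "\<And>x. x \<in> X \<Longrightarrow> fst (Rep_ll x) = False" by auto
    define XF where "XF = {p. \<exists>x\<in>X. Rep_ll x = (False, p)}"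
    obtain x0 where x0: "x0 \<in> X" using ne by blast
    have XFne: "XF \<noteq> {}" unfolding XF_def using x0 allF[OF x0] by (cases "Rep_ll x0") auto
    have XFR: "XF \<subseteq> long_ray_carrier"
    proof
      fix p assume "p \<in> XF"
      then obtain x where "Rep_ll x = (False, p)" unfolding XF_def by blast
      then show "p \<in> long_ray_carrier" using Rsnd[of x] by simp
    qed
    obtain g where g: "g \<in> long_ray_carrier" "\<forall>x\<in>XF. lex_le g x" "\<forall>z. (\<forall>x\<in>XF. lex_le z x) \<longrightarrow> lex_le z g"
      using LR_inf[OF XFne XFR] by blast
    have repF: "\<exists>p. Rep_ll x = (False, p) \<and> p \<in> XF" if "x \<in> X" for x
      using allF[OF that] that unfolding XF_def by (cases "Rep_ll x") auto
    show ?thesis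
    proof (cases "g = (wbot, 0)")
      case False
      have gC: "(False, g) \<in> long_line_carrier" using g(1) False by (cases g) (auto simp: carrier_iff long_ray_carrier_def)
      define S0 where "S0 = Abs_ll (False, g)"
      have RS0: "Rep_ll S0 = (False, g)" unfolding S0_def by (rule Abs_ll_inverse[OF gC])
      have up: "\<forall>x\<in>X. x \<le> S0"
      proof
        fix x assume x: "x \<in> X"
        obtain p where p: "Rep_ll x = (False, p)" "p \<in> XF" using repF[OF x] by blast
        then have "lex_le g p" using g(2) by blast
        then show "x \<le> S0" unfolding le_ll_Rep RS0 p(1) by (simp add: ll_le_iff)
      qed
      have least: "\<forall>z. (\<forall>x\<in>X. x \<le> z) \<longrightarrow> S0 \<le> z"
      proof (intro allI impI)
        fix z assume z: "\<forall>x\<in>X. x \<le> z"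
        show "S0 \<le> z"
        proof (cases "fst (Rep_ll z)")
          case True
          then obtain t where t: "Rep_ll z = (True, t)" by (cases "Rep_ll z") auto
          show ?thesis unfolding le_ll_Rep RS0 t by (simp add: ll_le_iff)
        next
          case False
          then obtain t where t: "Rep_ll z = (False, t)" by (cases "Rep_ll z") auto
          have "\<forall>p\<in>XF. lex_le t p"
          proof
            fix p assume "p \<in> XF"
            then obtain x where "x \<in> X" "Rep_ll x = (False, p)" unfolding XF_def by blast
            then have "ll_le (False, p) (Rep_ll z)" using z le_ll_Rep by metis
            then show "lex_le t p" using t by (simp add: ll_le_iff)
          qed
          then have "lex_le t g" using g(3) by blast
          then show ?thesis unfolding le_ll_Rep RS0 t by (simp add: ll_le_iff)
        qed
      qed
      show ?thesis using up least by blast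
    next
      case True
      have gC: "(True, wbot::'w, 0) \<in> long_line_carrier" by (simp add: carrier_iff)
      define S0 where "S0 = Abs_ll (True, wbot::'w, 0)"
      have RS0: "Rep_ll S0 = (True, wbot::'w, 0)" unfolding S0_def by (rule Abs_ll_inverse[OF gC])
      have up: "\<forall>x\<in>X. x \<le> S0"
      proof
        fix x assume x: "x \<in> X"
        obtain p where p: "Rep_ll x = (False, p)" "p \<in> XF" using repF[OF x] by blast
        show "x \<le> S0" unfolding le_ll_Rep RS0 p(1) by (simp add: ll_le_iff)
      qed
      have least: "\<forall>z. (\<forall>x\<in>X. x \<le> z) \<longrightarrow> S0 \<le> z"
      proof (intro allI impI)
        fix z assume z: "\<forall>x\<in>X. x \<le> z"
        show "S0 \<le> z"
        proof (cases "fst (Rep_ll z)")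
          case True
          then obtain t where t: "Rep_ll z = (True, t)" by (cases "Rep_ll z") auto
          have "lex_le (wbot, 0) t"
            using Rsnd[of z] t wbot_le[of "fst t"] unfolding lex_le_iff long_ray_carrier_def
            by (cases t) (auto simp: le_less)
          then show ?thesis unfolding le_ll_Rep RS0 t by (simp add: ll_le_iff)
        next
          case False
          then obtain t where t: "Rep_ll z = (False, t)" by (cases "Rep_ll z") auto
          have "\<forall>p\<in>XF. lex_le t p"
          proof
            fix p assume "p \<in> XF"
            then obtain x where "x \<in> X" "Rep_ll x = (False, p)" unfolding XF_def by blast
            then have "ll_le (False, p) (Rep_ll z)" using z le_ll_Rep by metis
            then show "lex_le t p" using t by (simp add: ll_le_iff)
          qed
          then have "lex_le t (wbot, 0)" using g(3) True by blast
          moreover have "t \<in> long_ray_carrier" using Rsnd[of z] t by simp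
          ultimately have "t = (wbot, 0)" using wbot_le[of "fst t"] unfolding lex_le_iff long_ray_carrier_def
            by (cases t) (auto simp: not_less[symmetric])
          then have "Rep_ll z = (False, wbot, 0)" using t by simp
          then show ?thesis using Rep_ll_carrier[of z] by (simp add: carrier_iff)
        qed
      qed
      show ?thesis using up least by blast
    qed
  qed
qed

lemma ll_witness:
  assumes a: "a \<in> long_line_carrier" and b: "b \<in> long_line_carrier" and ab: "long_line_less a b"
  shows "\<exists>d\<in>long_line_carrier. long_line_less a d \<and> long_line_less d b \<and> snd (snd d) \<in> \<rat> \<and>
           (fst (snd d) = fst (snd a) \<or> fst (snd d) = fst (snd b) \<or> fst (snd d) = wbot)"
proof -
  obtain ba v s where ea: "a = (ba, v, s)" by (metis prod_cases3)
  obtain bb v' s' where eb: "b = (bb, v', s')" by (metis prod_cases3)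
  have ca: "0 \<le> s" "s < 1" "\<not> (ba = False \<and> v = wbot \<and> s = 0)" using a ea by (auto simp: carrier_iff)
  have cb: "0 \<le> s'" "s' < 1" "\<not> (bb = False \<and> v' = wbot \<and> s' = 0)" using b eb by (auto simp: carrier_iff)
  have lt: "long_line_less (ba, v, s) (bb, v', s')" using ab ea eb by simp
  show ?thesis
  proof (cases ba)
    case True
    then have bbT: "bb" and lx: "lex_less (v, s) (v', s')" using lt by (auto simp: lll_iff)
    show ?thesis
    proof (cases "v = v'")
      case True
      then have "s < s'" using lx by (simp add: lex_less_def)
      then obtain q where q: "q \<in> \<rat>" "s < q" "q < s'" using Rats_dense_in_real by blast
      have "(True, v, q) \<in> long_line_carrier" using q ca cb by (simp add: carrier_iff)
      moreover have "long_line_less a (True, v, q)" using ea \<open>ba\<close> q by (simp add: lll_iff lex_less_def)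
      moreover have "long_line_less (True, v, q) b" using eb bbT q True by (simp add: lll_iff lex_less_def)
      ultimately show ?thesis using q(1) ea by (intro bexI[of _ "(True, v, q)"]) auto
    next
      case False
      then have "v < v'" using lx by (simp add: lex_less_def)
      obtain q where q: "q \<in> \<rat>" "s < q" "q < 1" using Rats_dense_in_real ca(2) by blast
      have "(True, v, q) \<in> long_line_carrier" using q ca by (simp add: carrier_iff)
      moreover have "long_line_less a (True, v, q)" using ea \<open>ba\<close> q by (simp add: lll_iff lex_less_def)
      moreover have "long_line_less (True, v, q) b" using eb bbT \<open>v < v'\<close> by (simp add: lll_iff lex_less_def)
      ultimately show ?thesis using q(1) ea by (intro bexI[of _ "(True, v, q)"]) auto
    qed
  next
    case False
    note baF = False
    show ?thesis
    proof (cases bb)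
      case True
      show ?thesis
      proof (cases "(v', s') = (wbot, 0)")
        case False
        have "(True, wbot, 0) \<in> long_line_carrier" by (simp add: carrier_iff)
        moreover have "long_line_less a (True, wbot, 0)" using ea baF by (simp add: lll_iff)
        moreover have "lex_less (wbot, 0) (v', s')"
          using False wbot_le[of v'] cb(1) unfolding lex_less_def by (auto simp: le_less)
        then have "long_line_less (True, wbot, 0) b" using eb True by (simp add: lll_iff)
        ultimately show ?thesis by (intro bexI[of _ "(True, wbot, 0)"]) auto
      next
        case eq: True
        have bw: "v' = wbot" "s' = 0" using eq by auto
        show ?thesis
        proof (cases "v = wbot")
          case False
          then have "wbot < v" using wbot_le[of v] by (simp add: le_less)
          have "(False, wbot, 1/2) \<in> long_line_carrier" by (simp add: carrier_iff)
          moreover have "long_line_less a (False, wbot, 1/2)" using ea baF \<open>wbot < v\<close> by (simp add: lll_iff lex_less_def)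
          moreover have "long_line_less (False, wbot, 1/2) b" using eb \<open>bb\<close> by (simp add: lll_iff)
          ultimately show ?thesis by (intro bexI[of _ "(False, wbot, 1/2)"]) auto
        next
          case True
          then have "0 < s" using ca baF by auto
          then obtain q where q: "q \<in> \<rat>" "0 < q" "q < s" using Rats_dense_in_real by blast
          have "(False, wbot, q) \<in> long_line_carrier" using q ca by (simp add: carrier_iff)
          moreover have "long_line_less a (False, wbot, q)" using ea baF True q by (simp add: lll_iff lex_less_def)
          moreover have "long_line_less (False, wbot, q) b" using eb \<open>bb\<close> by (simp add: lll_iff)
          ultimately show ?thesis using q(1) by (intro bexI[of _ "(False, wbot, q)"]) auto
        qed
      qed
    next
      case False
      note bbF = False
      then have lx: "lex_less (v', s') (v, s)" using lt baF by (simp add: lll_iff)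
      show ?thesis
      proof (cases "v = v'")
        case True
        then have "s' < s" using lx by (simp add: lex_less_def)
        then obtain q where q: "q \<in> \<rat>" "s' < q" "q < s" using Rats_dense_in_real by blast
        have "(False, v, q) \<in> long_line_carrier" using q ca cb by (simp add: carrier_iff)
        moreover have "long_line_less a (False, v, q)" using ea baF q by (simp add: lll_iff lex_less_def)
        moreover have "long_line_less (False, v, q) b" using eb bbF q True by (simp add: lll_iff lex_less_def)
        ultimately show ?thesis using q(1) ea by (intro bexI[of _ "(False, v, q)"]) auto
      next
        case False
        then have "v' < v" using lx by (simp add: lex_less_def)
        obtain q where q: "q \<in> \<rat>" "s' < q" "q < 1" using Rats_dense_in_real cb(2) by blast
        have "(False, v', q) \<in> long_line_carrier" using q cb by (simp add: carrier_iff)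
        moreover have "long_line_less a (False, v', q)" using ea baF \<open>v' < v\<close> by (simp add: lll_iff lex_less_def)
        moreover have "long_line_less (False, v', q) b" using eb bbF q by (simp add: lll_iff lex_less_def)
        ultimately show ?thesis using q(1) eb by (intro bexI[of _ "(False, v', q)"]) auto
      qed
    qed
  qed
qed

instantiation ll :: (wellorder) conditionally_complete_linorder
begin
definition Sup_ll :: "'a ll set \<Rightarrow> 'a ll" where
  "Sup_ll X = (SOME s. (\<forall>x\<in>X. x \<le> s) \<and> (\<forall>z. (\<forall>x\<in>X. x \<le> z) \<longrightarrow> s \<le> z))"
definition Inf_ll :: "'a ll set \<Rightarrow> 'a ll" where
  "Inf_ll X = Sup {y. \<forall>x\<in>X. y \<le> x}"

lemma Sup_ll_prop:
  fixes X :: "'a ll set"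
  assumes "X \<noteq> {}" "bdd_above X"
  shows "(\<forall>x\<in>X. x \<le> Sup X) \<and> (\<forall>z. (\<forall>x\<in>X. x \<le> z) \<longrightarrow> Sup X \<le> z)"
proof -
  have "\<exists>u. \<forall>x\<in>X. x \<le> u" using assms(2) by (auto simp: bdd_above_def)
  from ll_lub[OF assms(1) this] show ?thesis unfolding Sup_ll_def by (rule someI_ex)
qed

instance
proof
  fix x z :: "'a ll" and X :: "'a ll set"
  show "x \<in> X \<Longrightarrow> bdd_above X \<Longrightarrow> x \<le> Sup X" using Sup_ll_prop by blast
  show "X \<noteq> {} \<Longrightarrow> (\<And>x. x \<in> X \<Longrightarrow> x \<le> z) \<Longrightarrow> Sup X \<le> z"
  proof -
    assume ne: "X \<noteq> {}" and ub: "\<And>x. x \<in> X \<Longrightarrow> x \<le> z"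
    have "bdd_above X" using ub by (auto simp: bdd_above_def)
    then show "Sup X \<le> z" using Sup_ll_prop[OF ne] ub by blast
  qed
  show "x \<in> X \<Longrightarrow> bdd_below X \<Longrightarrow> Inf X \<le> x"
  proof -
    assume xX: "x \<in> X" and bb: "bdd_below X"
    define L where "L = {y. \<forall>x\<in>X. y \<le> x}"
    have Lne: "L \<noteq> {}" using bb by (auto simp: bdd_below_def L_def)
    have Lb: "bdd_above L" using xX by (auto simp: bdd_above_def L_def)
    have "Sup L \<le> x" using Sup_ll_prop[OF Lne Lb] xX unfolding L_def by blast
    then show "Inf X \<le> x" unfolding Inf_ll_def L_def .
  qed
  show "X \<noteq> {} \<Longrightarrow> (\<And>x. x \<in> X \<Longrightarrow> z \<le> x) \<Longrightarrow> z \<le> Inf X"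
  proof -
    assume ne: "X \<noteq> {}" and lb: "\<And>x. x \<in> X \<Longrightarrow> z \<le> x"
    define L where "L = {y. \<forall>x\<in>X. y \<le> x}"
    have zL: "z \<in> L" using lb unfolding L_def by blast
    then have Lne: "L \<noteq> {}" by blast
    obtain x0 where "x0 \<in> X" using ne by blast
    then have Lb: "bdd_above L" by (auto simp: bdd_above_def L_def)
    have "z \<le> Sup L" using Sup_ll_prop[OF Lne Lb] zL by blast
    then show "z \<le> Inf X" unfolding Inf_ll_def L_def .
  qed
qed
end

instance ll :: (wellorder) linear_continuum
proof
  fix x y :: "'a ll"
  assume "x < y"
  then have "long_line_less (Rep_ll x) (Rep_ll y)" by (simp add: less_ll_def)
  from ll_witness[OF Rep_ll_carrier Rep_ll_carrier this] obtain d where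
    d: "d \<in> long_line_carrier" "long_line_less (Rep_ll x) d" "long_line_less d (Rep_ll y)" by blast
  have "Rep_ll (Abs_ll d) = d" using d(1) by (rule Abs_ll_inverse)
  then show "\<exists>z. x < z \<and> z < y" using d by (intro exI[of _ "Abs_ll d"]) (simp add: less_ll_def)
next
  have c1: "(True, wbot::'a, 0) \<in> long_line_carrier" by (simp add: carrier_iff)
  have c2: "(True, wbot::'a, 1/2) \<in> long_line_carrier" by (simp add: carrier_iff)
  have "Abs_ll (True, wbot::'a, 0) \<noteq> Abs_ll (True, wbot, 1/2)"
    using Abs_ll_inject[OF c1 c2] by simp
  then show "\<exists>a b::'a ll. a \<noteq> b" by blast
qed

instantiation ll :: (wellorder) linorder_topology
begin
definition open_ll :: "'a ll set \<Rightarrow> bool" where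
  "open_ll = generate_topology (range (\<lambda>a. {..< a}) \<union> range (\<lambda>a. {a <..}))"
instance by standard (rule open_ll_def)
end

instance ll :: (wellorder) linear_continuum_topology ..

lemma subtop_order:
  fixes S :: "'a::linorder_topology set"
  assumes conv: "\<And>x y z. x \<in> S \<Longrightarrow> z \<in> S \<Longrightarrow> x \<le> y \<Longrightarrow> y \<le> z \<Longrightarrow> y \<in> S"
  shows "top_of_set S = order_topology_on S (<)"
proof -
  define B where "B = insert S ({{x\<in>S. x < a} | a. a \<in> S} \<union> {{x\<in>S. a < x} | a. a \<in> S})"
  have SB: "S \<in> B" unfolding B_def by simp
  have lt: "generate_topology_on B (S \<inter> {..<a})" for a
  proof (cases "a \<in> S")
    case True
    have "S \<inter> {..<a} = {x\<in>S. x < a}" by auto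
    moreover have "{x\<in>S. x < a} \<in> B" unfolding B_def using True by blast
    ultimately show ?thesis by (simp add: generate_topology_on.Basis)
  next
    case False
    show ?thesis
    proof (cases "\<forall>x\<in>S. x < a")
      case True
      then have "S \<inter> {..<a} = S" by auto
      then show ?thesis using SB by (simp add: generate_topology_on.Basis)
    next
      case nall: False
      then obtain x where x: "x \<in> S" "a \<le> x" by (auto simp: not_less)
      have "S \<inter> {..<a} = {}"
      proof (rule ccontr)
        assume "S \<inter> {..<a} \<noteq> {}"
        then obtain y where y: "y \<in> S" "y < a" by auto
        have "a \<in> S" using conv[OF y(1) x(1) less_imp_le[OF y(2)] x(2)] .
        then show False using False by simp
      qed
      then show ?thesis by (simp add: generate_topology_on.Empty)
    qed
  qed
  have gt: "generate_topology_on B (S \<inter> {a<..})" for a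
  proof (cases "a \<in> S")
    case True
    have "S \<inter> {a<..} = {x\<in>S. a < x}" by auto
    moreover have "{x\<in>S. a < x} \<in> B" unfolding B_def using True by blast
    ultimately show ?thesis by (simp add: generate_topology_on.Basis)
  next
    case False
    show ?thesis
    proof (cases "\<forall>x\<in>S. a < x")
      case True
      then have "S \<inter> {a<..} = S" by auto
      then show ?thesis using SB by (simp add: generate_topology_on.Basis)
    next
      case nall: False
      then obtain x where x: "x \<in> S" "x \<le> a" by (auto simp: not_less)
      have "S \<inter> {a<..} = {}"
      proof (rule ccontr)
        assume "S \<inter> {a<..} \<noteq> {}"
        then obtain y where y: "y \<in> S" "a < y" by auto
        have "a \<in> S" using conv[OF x(1) y(1) x(2) less_imp_le[OF y(2)]] .
        then show False using False by simp
      qed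
      then show ?thesis by (simp add: generate_topology_on.Empty)
    qed
  qed
  have fwd: "generate_topology_on B (S \<inter> V)" if "generate_topology (range (\<lambda>a. {..< a}) \<union> range (\<lambda>a. {a <..})) V" for V
    using that
  proof (induction rule: generate_topology.induct)
    case UNIV
    then show ?case using SB by (simp add: generate_topology_on.Basis)
  next
    case (Int a b)
    have "S \<inter> (a \<inter> b) = (S \<inter> a) \<inter> (S \<inter> b)" by auto
    then show ?case using Int by (simp add: generate_topology_on.Int)
  next
    case (UN K)
    have e: "S \<inter> \<Union>K = \<Union>((\<lambda>k. S \<inter> k) ` K)" by auto
    have "generate_topology_on B (\<Union>((\<lambda>k. S \<inter> k) ` K))"
    proof (rule generate_topology_on.UN)
      fix k assume "k \<in> (\<lambda>k. S \<inter> k) ` K"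
      then obtain k0 where "k0 \<in> K" "k = S \<inter> k0" by auto
      then show "generate_topology_on B k" using UN.IH by blast
    qed
    then show ?case unfolding e .
  next
    case (Basis s)
    then consider a where "s = {..<a}" | a where "s = {a<..}" by auto
    then show ?case using lt gt by cases simp_all
  qed
  have bwd: "openin (top_of_set S) U" if "generate_topology_on B U" for U
  proof (rule generate_topology_on_coarsest[OF istopology_openin _ that])
    fix X assume "X \<in> B"
    then have "X = S \<or> (\<exists>a. X = {x\<in>S. x < a}) \<or> (\<exists>a. X = {x\<in>S. a < x})"
      unfolding B_def by auto
    then consider "X = S" | a where "X = {x\<in>S. x < a}" | a where "X = {x\<in>S. a < x}"
      by (elim disjE exE) auto
    then show "openin (top_of_set S) X"
    proof cases
      case 1 then show ?thesis by simp
    next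
      case 2
      have "X = S \<inter> {..<a}" using 2 by auto
      then show ?thesis by (auto simp: openin_open intro!: exI[of _ "{..<a}"])
    next
      case 3
      have "X = S \<inter> {a<..}" using 3 by auto
      then show ?thesis by (auto simp: openin_open intro!: exI[of _ "{a<..}"])
    qed
  qed
  have "openin (top_of_set S) U \<longleftrightarrow> openin (order_topology_on S (<)) U" for U
  proof
    assume "openin (top_of_set S) U"
    then obtain V where V: "open V" "U = S \<inter> V" by (auto simp: openin_open)
    have "generate_topology (range (\<lambda>a. {..< a}) \<union> range (\<lambda>a. {a <..})) V"
      using V(1) by (simp add: open_generated_order)
    then have "generate_topology_on B U" using fwd V(2) by simp
    then show "openin (order_topology_on S (<)) U"
      unfolding order_topology_on_def B_def[symmetric] by (simp add: openin_topology_generated_by_iff)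
  next
    assume "openin (order_topology_on S (<)) U"
    then have "generate_topology_on B U"
      unfolding order_topology_on_def B_def[symmetric] by (simp add: openin_topology_generated_by_iff)
    then show "openin (top_of_set S) U" by (rule bwd)
  qed
  then show ?thesis by (simp add: topology_eq)
qed

lemma order_iso_homeo:
  assumes inj: "inj_on g S" and img: "g ` S = S'"
    and ord: "\<And>x y. x \<in> S \<Longrightarrow> y \<in> S \<Longrightarrow> lt' (g x) (g y) \<longleftrightarrow> lt x y"
  shows "homeomorphic_map (order_topology_on S lt) (order_topology_on S' lt') g"
proof -
  define B where "B = insert S ({{x\<in>S. lt x a} | a. a \<in> S} \<union> {{x\<in>S. lt a x} | a. a \<in> S})"
  define B' where "B' = insert S' ({{x\<in>S'. lt' x a} | a. a \<in> S'} \<union> {{x\<in>S'. lt' a x} | a. a \<in> S'})"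
  have UB: "\<Union>B = S" unfolding B_def by auto
  have e1: "g ` {x\<in>S. lt x a} = {y\<in>S'. lt' y (g a)}" if aS: "a \<in> S" for a
  proof (intro equalityI subsetI)
    fix y assume "y \<in> g ` {x\<in>S. lt x a}"
    then obtain x where x: "x \<in> S" "lt x a" "y = g x" by auto
    have "lt' (g x) (g a)" using ord[OF x(1) aS] x(2) by simp
    moreover have "g x \<in> S'" using img x(1) by auto
    ultimately show "y \<in> {y\<in>S'. lt' y (g a)}" using x(3) by simp
  next
    fix y assume "y \<in> {y\<in>S'. lt' y (g a)}"
    then have y: "y \<in> S'" "lt' y (g a)" by auto
    then obtain x where x: "x \<in> S" "y = g x" using img by auto
    have "lt x a" using ord[OF x(1) aS] y(2) x(2) by simp
    then show "y \<in> g ` {x\<in>S. lt x a}" using x by auto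
  qed
  have e2: "g ` {x\<in>S. lt a x} = {y\<in>S'. lt' (g a) y}" if aS: "a \<in> S" for a
  proof (intro equalityI subsetI)
    fix y assume "y \<in> g ` {x\<in>S. lt a x}"
    then obtain x where x: "x \<in> S" "lt a x" "y = g x" by auto
    have "lt' (g a) (g x)" using ord[OF aS x(1)] x(2) by simp
    moreover have "g x \<in> S'" using img x(1) by auto
    ultimately show "y \<in> {y\<in>S'. lt' (g a) y}" using x(3) by simp
  next
    fix y assume "y \<in> {y\<in>S'. lt' (g a) y}"
    then have y: "y \<in> S'" "lt' (g a) y" by auto
    then obtain x where x: "x \<in> S" "y = g x" using img by auto
    have "lt a x" using ord[OF aS x(1)] y(2) x(2) by simp
    then show "y \<in> g ` {x\<in>S. lt a x}" using x by auto
  qed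
  have "(image g) ` B = B'"
  proof (intro equalityI subsetI)
    fix Z assume "Z \<in> (image g) ` B"
    then obtain Z0 where Z0: "Z0 \<in> B" "Z = g ` Z0" by auto
    then consider "Z0 = S" | a where "a \<in> S" "Z0 = {x\<in>S. lt x a}" | a where "a \<in> S" "Z0 = {x\<in>S. lt a x}"
      unfolding B_def by blast
    then show "Z \<in> B'"
    proof cases
      case 1 then show ?thesis using Z0(2) img unfolding B'_def by simp
    next
      case 2
      have "Z = {y\<in>S'. lt' y (g a)}" using Z0(2) 2 e1 by simp
      moreover have "g a \<in> S'" using 2(1) img by auto
      ultimately show ?thesis unfolding B'_def by blast
    next
      case 3
      have "Z = {y\<in>S'. lt' (g a) y}" using Z0(2) 3 e2 by simp
      moreover have "g a \<in> S'" using 3(1) img by auto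
      ultimately show ?thesis unfolding B'_def by blast
    qed
  next
    fix Z assume "Z \<in> B'"
    then consider "Z = S'" | b where "b \<in> S'" "Z = {x\<in>S'. lt' x b}" | b where "b \<in> S'" "Z = {x\<in>S'. lt' b x}"
      unfolding B'_def by blast
    then show "Z \<in> (image g) ` B"
    proof cases
      case 1
      have "S \<in> B" unfolding B_def by simp
      moreover have "Z = g ` S" using 1 img by simp
      ultimately show ?thesis by (rule rev_image_eqI)
    next
      case 2
      then obtain a where a: "a \<in> S" "b = g a" using img by auto
      have "{x\<in>S. lt x a} \<in> B" unfolding B_def using a(1) by blast
      moreover have "Z = g ` {x\<in>S. lt x a}" using 2 a e1 by simp
      ultimately show ?thesis by blast
    next
      case 3
      then obtain a where a: "a \<in> S" "b = g a" using img by auto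
      have "{x\<in>S. lt a x} \<in> B" unfolding B_def using a(1) by blast
      moreover have "Z = g ` {x\<in>S. lt a x}" using 3 a e2 by simp
      ultimately show ?thesis by blast
    qed
  qed
  then have "homeomorphic_map (topology_generated_by B) (topology_generated_by B') g"
    using homeo_generated[of g B B'] inj UB by simp
  then show ?thesis unfolding order_topology_on_def B_def B'_def .
qed

lemma om_countable_le:
  assumes "omega1_type TYPE('w::wellorder)"
  shows "countable {..(w::'w)}"
proof -
  have "countable {..<w}" using assms unfolding omega1_type_def by blast
  moreover have "{..w} = insert w {..<w}" by auto
  ultimately show ?thesis by simp
qed

lemma om_bound:
  assumes om: "omega1_type TYPE('w::wellorder)" and W: "countable (W::'w set)"
  shows "\<exists>m. \<forall>w\<in>W. w < m"
proof -
  define U where "U = (\<Union>w\<in>W. {..w})"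
  have "countable U" unfolding U_def using W om_countable_le[OF om] by (intro countable_UN) auto
  moreover have "uncountable (UNIV :: 'w set)" using om unfolding omega1_type_def by blast
  ultimately have "U \<noteq> UNIV" by auto
  then obtain m where m: "m \<notin> U" by auto
  have "\<forall>w\<in>W. w < m"
  proof
    fix w assume "w \<in> W"
    then have "\<not> m \<le> w" using m unfolding U_def by auto
    then show "w < m" by simp
  qed
  then show ?thesis by blast
qed

definition wll :: "'w::wellorder ll \<Rightarrow> 'w" where "wll x = fst (snd (Rep_ll x))"

lemma Rsnd: "snd (Rep_ll x) \<in> long_ray_carrier"
proof -
  obtain b p where e: "Rep_ll x = (b, p)" by (metis surj_pair)
  have "(b, p) \<in> long_line_carrier" using Rep_ll_carrier[of x] e by simp
  then show ?thesis using e by (simp add: long_line_carrier_def)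
qed

lemma Rep_Abs_T: "(r::real) \<in> {0..<1} \<Longrightarrow> Rep_ll (Abs_ll (True, w, r)) = (True, w, r)"
  by (rule Abs_ll_inverse) (simp add: carrier_iff)

lemma ll_above:
  fixes t :: "'w::wellorder ll"
  assumes "wll t < m" shows "t < Abs_ll (True, m, 0)"
proof -
  have R: "Rep_ll (Abs_ll (True, m, 0)) = (True, m, 0)" by (rule Rep_Abs_T) simp
  obtain b v r where e: "Rep_ll t = (b, v, r)" by (metis prod_cases3)
  have "v < m" using assms e unfolding wll_def by simp
  then show ?thesis unfolding less_ll_def R e by (cases b) (simp_all add: lll_iff lex_less_def)
qed

lemma ll_below:
  fixes t :: "'w::wellorder ll"
  assumes "wll t < m" shows "Abs_ll (False, m, 1/2) < t"
proof -
  have R: "Rep_ll (Abs_ll (False, m, 1/2)) = (False, m, 1/2)" by (rule Abs_ll_inverse) (simp add: carrier_iff)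
  obtain b v r where e: "Rep_ll t = (b, v, r)" by (metis prod_cases3)
  have "v < m" using assms e unfolding wll_def by simp
  then show ?thesis unfolding less_ll_def R e by (cases b) (simp_all add: lll_iff lex_less_def)
qed

lemma ll_nomax: "\<exists>y. (x::'w::wellorder ll) < y"
proof -
  obtain b v r where e: "Rep_ll x = (b, v, r)" and r: "0 \<le> r" "r < 1" using Rep_ll_cases[of x] by metis
  show ?thesis
  proof (cases b)
    case True
    have R: "Rep_ll (Abs_ll (True, v, (r+1)/2)) = (True, v, (r+1)/2)" by (rule Rep_Abs_T) (use r in simp)
    have "x < Abs_ll (True, v, (r+1)/2)" unfolding less_ll_def R e using True r by (simp add: lll_iff lex_less_def)
    then show ?thesis by blast
  next
    case False
    have R: "Rep_ll (Abs_ll (True, wbot::'w, 0)) = (True, wbot, 0)" by (rule Rep_Abs_T) simp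
    have "x < Abs_ll (True, wbot, 0)" unfolding less_ll_def R e using False by (simp add: lll_iff)
    then show ?thesis by blast
  qed
qed

lemma ll_wbound:
  fixes a x b :: "'w::wellorder ll"
  assumes "a \<le> x" "x \<le> b" shows "wll x \<le> max (wll a) (wll b)"
proof -
  obtain bx p where ex: "Rep_ll x = (bx, p)" by (metis surj_pair)
  obtain ba q where ea: "Rep_ll a = (ba, q)" by (metis surj_pair)
  obtain bb q' where eb: "Rep_ll b = (bb, q')" by (metis surj_pair)
  have la: "ll_le (ba, q) (bx, p)" and lb: "ll_le (bx, p) (bb, q')" using assms ex ea eb le_ll_Rep by metis+
  show ?thesis
  proof (cases bx)
    case True
    then have "lex_le p q'" using lb by (simp add: ll_le_iff)
    then have "fst p \<le> fst q'" unfolding lex_le_iff by auto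
    then show ?thesis unfolding wll_def ex eb by (simp add: le_max_iff_disj)
  next
    case False
    then have "lex_le p q" using la by (cases ba) (simp_all add: ll_le_iff)
    then have "fst p \<le> fst q" unfolding lex_le_iff by auto
    then show ?thesis unfolding wll_def ex ea by (simp add: le_max_iff_disj)
  qed
qed

lemma ll_sep:
  assumes om: "omega1_type TYPE('w::wellorder)"
  shows "\<exists>D. countable D \<and> (\<forall>x y. a \<le> x \<longrightarrow> x < y \<longrightarrow> y \<le> b \<longrightarrow> (\<exists>d\<in>D. x < d \<and> d < (y::'w ll)))"
proof -
  define M where "M = max (wll a) (wll b)"
  define D where "D = {x::'w ll. wll x \<le> M \<and> snd (snd (Rep_ll x)) \<in> \<rat>}"
  have "Rep_ll ` D \<subseteq> UNIV \<times> ({..M} \<times> \<rat>)"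
  proof
    fix z assume "z \<in> Rep_ll ` D"
    then obtain x where x: "x \<in> D" "z = Rep_ll x" by auto
    then have "fst (snd z) \<le> M" "snd (snd z) \<in> \<rat>" unfolding D_def wll_def by auto
    then show "z \<in> UNIV \<times> ({..M} \<times> \<rat>)" by (simp add: mem_Times_iff)
  qed
  moreover have "countable (UNIV \<times> ({..M} \<times> \<rat>) :: (bool \<times> 'w \<times> real) set)"
    using om_countable_le[OF om, of M] countable_rat by (intro countable_SIGMA) auto
  ultimately have "countable (Rep_ll ` D)" by (rule countable_subset)
  moreover have "inj_on Rep_ll D" by (meson Rep_ll_inject inj_onI)
  ultimately have cD: "countable D" by (rule countable_image_inj_on)
  have dense: "\<exists>d\<in>D. x < d \<and> d < y" if "a \<le> x" "x < y" "y \<le> b" for x y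
  proof -
    have "long_line_less (Rep_ll x) (Rep_ll y)" using that(2) by (simp add: less_ll_def)
    from ll_witness[OF Rep_ll_carrier Rep_ll_carrier this] obtain d where
      d: "d \<in> long_line_carrier" "long_line_less (Rep_ll x) d" "long_line_less d (Rep_ll y)" "snd (snd d) \<in> \<rat>"
        "fst (snd d) = fst (snd (Rep_ll x)) \<or> fst (snd d) = fst (snd (Rep_ll y)) \<or> fst (snd d) = wbot"
      by blast
    have R: "Rep_ll (Abs_ll d) = d" using d(1) by (rule Abs_ll_inverse)
    have "wll x \<le> M" unfolding M_def using ll_wbound[of a x b] that by simp
    moreover have "wll y \<le> M" unfolding M_def using ll_wbound[of a y b] that by simp
    moreover have "wbot \<le> M" by (rule wbot_le)
    ultimately have "wll (Abs_ll d) \<le> M" using d(5) unfolding wll_def R by auto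
    then have "Abs_ll d \<in> D" unfolding D_def using d(4) R by simp
    moreover have "x < Abs_ll d" "Abs_ll d < y" using d(2,3) R by (simp_all add: less_ll_def)
    ultimately show ?thesis by blast
  qed
  show ?thesis using cD dense by blast
qed

lemma ll_bdd:
  assumes om: "omega1_type TYPE('w::wellorder)" and T: "countable (T :: 'w ll set)"
  shows "\<exists>m. \<forall>t\<in>T. wll t < m"
  using om_bound[OF om, of "wll ` T"] T by auto

lemma LC_UNIV:
  assumes om: "omega1_type TYPE('w::wellorder)"
  shows "LC (UNIV :: 'w ll set)"
proof
  show "closed (UNIV :: 'w ll set)" by simp
  show "\<And>x y z. x \<in> UNIV \<Longrightarrow> z \<in> UNIV \<Longrightarrow> x \<le> y \<Longrightarrow> y \<le> z \<Longrightarrow> y \<in> (UNIV :: 'w ll set)" by simp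
  show "(UNIV :: 'w ll set) \<noteq> {}" by simp
  show "\<And>x. x \<in> UNIV \<Longrightarrow> \<exists>y\<in>UNIV. x < (y::'w ll)" using ll_nomax by blast
  show "\<exists>l\<in>UNIV. \<exists>u\<in>UNIV. \<forall>t\<in>T. l \<le> t \<and> t \<le> u" if T: "countable T" "T \<subseteq> (UNIV :: 'w ll set)" for T
  proof -
    obtain m where m: "\<forall>t\<in>T. wll t < m" using ll_bdd[OF om T(1)] by blast
    have "\<forall>t\<in>T. Abs_ll (False, m, 1/2) \<le> t \<and> t \<le> Abs_ll (True, m, 0)"
      using m ll_above ll_below by (blast intro: less_imp_le)
    then show ?thesis by blast
  qed
  show "\<And>a b::'w ll. \<exists>D. countable D \<and> (\<forall>x y. a \<le> x \<longrightarrow> x < y \<longrightarrow> y \<le> b \<longrightarrow> (\<exists>d\<in>D. x < d \<and> d < y))"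
    using ll_sep[OF om] by blast
qed

definition cglue :: "'w::wellorder ll" where "cglue = Abs_ll (True, wbot, 0)"

lemma Rep_cglue: "Rep_ll cglue = (True, wbot, 0)"
  unfolding cglue_def by (rule Rep_Abs_T) simp

lemma LC_ray:
  assumes om: "omega1_type TYPE('w::wellorder)"
  shows "LC {(cglue::'w ll)..}"
proof
  show "closed {(cglue::'w ll)..}" by simp
  show "\<And>x y z. x \<in> {cglue..} \<Longrightarrow> z \<in> {cglue..} \<Longrightarrow> x \<le> y \<Longrightarrow> y \<le> z \<Longrightarrow> y \<in> {(cglue::'w ll)..}" by simp
  show "{(cglue::'w ll)..} \<noteq> {}" by auto
  show "\<And>x. x \<in> {cglue..} \<Longrightarrow> \<exists>y\<in>{cglue..}. x < (y::'w ll)"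
    using ll_nomax by (meson atLeast_iff less_imp_le order_trans)
  show "\<exists>l\<in>{cglue..}. \<exists>u\<in>{cglue..}. \<forall>t\<in>T. l \<le> t \<and> t \<le> u" if T: "countable T" "T \<subseteq> {(cglue::'w ll)..}" for T
  proof -
    obtain m where m: "\<forall>t\<in>T. wll t < m" using ll_bdd[OF om T(1)] by blast
    define u where "u = max cglue (Abs_ll (True, m, 0))"
    have "\<forall>t\<in>T. cglue \<le> t \<and> t \<le> u"
    proof
      fix t assume t: "t \<in> T"
      have "t < Abs_ll (True, m, 0)" using m t ll_above by blast
      then have "t \<le> u" unfolding u_def by (simp add: le_max_iff_disj less_imp_le)
      moreover have "cglue \<le> t" using T(2) t by auto
      ultimately show "cglue \<le> t \<and> t \<le> u" by simp
    qed
    moreover have "u \<in> {cglue..}" unfolding u_def by simp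
    ultimately show ?thesis by blast
  qed
  show "\<And>a b::'w ll. \<exists>D. countable D \<and> (\<forall>x y. a \<le> x \<longrightarrow> x < y \<longrightarrow> y \<le> b \<longrightarrow> (\<exists>d\<in>D. x < d \<and> d < y))"
    using ll_sep[OF om] by blast
qed

lemma hom_line: "homeomorphic_map (top_of_set (UNIV :: 'w::wellorder ll set)) long_line Rep_ll"
proof -
  have "top_of_set (UNIV :: 'w ll set) = order_topology_on UNIV (<)" by (rule subtop_order) simp
  moreover have "homeomorphic_map (order_topology_on (UNIV :: 'w ll set) (<)) (order_topology_on long_line_carrier long_line_less) Rep_ll"
  proof (rule order_iso_homeo)
    show "inj_on Rep_ll UNIV" by (meson Rep_ll_inject inj_onI)
    show "Rep_ll ` UNIV = long_line_carrier"
    proof (intro equalityI subsetI)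
      fix z assume "z \<in> Rep_ll ` UNIV" then show "z \<in> long_line_carrier" using Rep_ll_carrier by auto
    next
      fix z assume "z \<in> long_line_carrier"
      then have "Rep_ll (Abs_ll z) = z" by (rule Abs_ll_inverse)
      then show "z \<in> Rep_ll ` UNIV" by (metis rangeI)
    qed
    show "\<And>x y. x \<in> UNIV \<Longrightarrow> y \<in> UNIV \<Longrightarrow> long_line_less (Rep_ll x) (Rep_ll y) = (x < y)"
      by (simp add: less_ll_def)
  qed
  ultimately show ?thesis unfolding long_line_def by simp
qed

lemma ge_cglue: "cglue \<le> x \<Longrightarrow> \<exists>p. Rep_ll x = (True, p)"
proof -
  assume "cglue \<le> x"
  then have "ll_le (True, wbot, 0) (Rep_ll x)" using le_ll_Rep Rep_cglue by metis
  then show ?thesis by (cases "Rep_ll x") (auto simp: ll_le_iff)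
qed

lemma hom_ray: "homeomorphic_map (top_of_set {(cglue :: 'w::wellorder ll)..}) long_ray (snd \<circ> Rep_ll)"
proof -
  have "top_of_set {(cglue :: 'w ll)..} = order_topology_on {cglue..} (<)" by (rule subtop_order) auto
  moreover have "homeomorphic_map (order_topology_on {(cglue :: 'w ll)..} (<)) (order_topology_on long_ray_carrier lex_less) (snd \<circ> Rep_ll)"
  proof (rule order_iso_homeo)
    show "inj_on (snd \<circ> Rep_ll) {(cglue :: 'w ll)..}"
    proof (rule inj_onI)
      fix x y :: "'w ll" assume x: "x \<in> {cglue..}" and y: "y \<in> {cglue..}" and e: "(snd \<circ> Rep_ll) x = (snd \<circ> Rep_ll) y"
      have "\<exists>p. Rep_ll x = (True, p)" using ge_cglue x by simp
      then obtain p where p: "Rep_ll x = (True, p)" ..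
      have "\<exists>q. Rep_ll y = (True, q)" using ge_cglue y by simp
      then obtain q where q: "Rep_ll y = (True, q)" ..
      have "Rep_ll x = Rep_ll y" using p q e by simp
      then show "x = y" by (simp add: Rep_ll_inject)
    qed
    show "(snd \<circ> Rep_ll) ` {(cglue :: 'w ll)..} = long_ray_carrier"
    proof (intro equalityI subsetI)
      fix z assume "z \<in> (snd \<circ> Rep_ll) ` {(cglue :: 'w ll)..}"
      then show "z \<in> long_ray_carrier" using Rsnd by auto
    next
      fix z :: "'w \<times> real" assume zR: "z \<in> long_ray_carrier"
      have zC: "(True, z) \<in> long_line_carrier" using zR unfolding long_line_carrier_def by auto
      have R: "Rep_ll (Abs_ll (True, z)) = (True, z)" by (rule Abs_ll_inverse[OF zC])
      have "lex_le (wbot, 0) z" using zR wbot_le[of "fst z"] unfolding lex_le_iff long_ray_carrier_def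
        by (cases z) (auto simp: le_less)
      then have "cglue \<le> Abs_ll (True, z)" unfolding le_ll_Rep R Rep_cglue by (simp add: ll_le_iff)
      then show "z \<in> (snd \<circ> Rep_ll) ` {(cglue :: 'w ll)..}" using R by (metis atLeast_iff comp_apply image_eqI snd_conv)
    qed
    show "lex_less ((snd \<circ> Rep_ll) x) ((snd \<circ> Rep_ll) y) = (x < y)" if "x \<in> {(cglue :: 'w ll)..}" "y \<in> {(cglue :: 'w ll)..}" for x y
    proof -
      have "\<exists>p. Rep_ll x = (True, p)" using ge_cglue that(1) by simp
      then obtain p where p: "Rep_ll x = (True, p)" ..
      have "\<exists>q. Rep_ll y = (True, q)" using ge_cglue that(2) by simp
      then obtain q where q: "Rep_ll y = (True, q)" ..
      show ?thesis unfolding less_ll_def using p q by (simp add: lll_iff)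
    qed
  qed
  ultimately show ?thesis unfolding long_ray_def by simp
qed

theorem proposition5p1:
  assumes "omega1_type TYPE('w::wellorder)"
  shows "countably_tight (compact_open_on (homeo_cpt (long_ray :: ('w \<times> real) topology))
                                          (long_ray :: ('w \<times> real) topology))
       \<and> countably_tight (compact_open_on (homeo_cpt (long_line :: (bool \<times> 'w \<times> real) topology))
                                          (long_line :: (bool \<times> 'w \<times> real) topology))"
proof
  interpret R: LC "{(cglue :: 'w ll)..}" by (rule LC_ray[OF assms])
  show "countably_tight (compact_open_on (homeo_cpt (long_ray :: ('w \<times> real) topology)) long_ray)"
    by (rule ct_transfer[OF hom_ray R.TT_countably_tight])
next
  interpret L: LC "UNIV :: 'w ll set" by (rule LC_UNIV[OF assms])
  show "countably_tight (compact_open_on (homeo_cpt (long_line :: (bool \<times> 'w \<times> real) topology)) long_line)"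
    by (rule ct_transfer[OF hom_line L.TT_countably_tight])
qed

end
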